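(* In the production planning setting described in the context (general case, intervals may overlap), the adversarial problem under $\mathcal{U}^d$ — given $\pmb{x}\in\mathbb{X}$, find $\pmb{D}\in\mathcal{U}^d$ maximizing $\sum_{t\in[T]}\max\{f_I(X_t,D_t),f_B(X_t,D_t)\}$ — can be solved in $O(T^4)$ time.
   Context: There are $T\ge 1$ periods, $[T]=\{1,\dots,T\}$. Given are a production cost $c^P$, an inventory cost $c^I$, a backordering cost $c^B$ and a selling price $b^P$ (independent of the period), and a set $\mathbb{X}\subseteq\mathbb{R}^T_+$ of feasible production plans $\pmb{x}=(x_1,\dots,x_T)$ described by finitely many linear constraints. For a plan write $X_t=\sum_{i\in[t]}x_i$. For $t\in[T-1]$ let $f_I(X_t,D_t)=c^I(X_t-D_t)$ and $f_B(X_t,D_t)=c^B(D_t-X_t)$; for $t=T$ let $f_I(X_T,D_T)=c^I(X_T-D_T)+c^PX_T-b^PD_T$ and $f_B(X_T,D_T)=c^B(D_T-X_T)+c^PX_T-b^PX_T$. Nominal cumulative demands $\widehat{D}_t\ge 0$ satisfy $\widehat{D}_t\le\widehat{D}_{t+1}$, and deviations satisfy $0\le\Delta_t\le\widehat{D}_t$. The discrete budgeted scenario set is $\mathcal{U}^d=\{\pmb{D}\in\mathbb{R}^T: D_t\le D_{t+1}\ (t\in[T-1]),\ D_t\in[\widehat{D}_t-\Delta_t,\widehat{D}_t+\Delta_t]\ (t\in[T]),\ |\{t: D_t\ne\widehat{D}_t\}|\le\Gamma^d\}$ with integer $\Gamma^d\in\{0,\dots,T\}$. No non-overlapping assumption on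 the intervals is made. *)

theory Defs
  imports Complex_Main
begin

text \<open>Vectors indexed by periods 1..T are functions nat => real; only the
values at t in {1..T} are relevant.\<close>

definition cumX :: "(nat \<Rightarrow> real) \<Rightarrow> nat \<Rightarrow> real" where
  "cumX x t = (\<Sum>i=1..t. x i)"

definition fI :: "nat \<Rightarrow> real \<Rightarrow> real \<Rightarrow> real \<Rightarrow> nat \<Rightarrow> real \<Rightarrow> real \<Rightarrow> real" where
  "fI T cP cI bP t X D =
     (if t = T then cI * (X - D) + cP * X - bP * D else cI * (X - D))"

definition fB :: "nat \<Rightarrow> real \<Rightarrow> real \<Rightarrow> real \<Rightarrow> nat \<Rightarrow> real \<Rightarrow> real \<Rightarrow> real" where
  "fB T cP cB bP t X D =
     (if t = T then cB * (D - X) + cP * X - bP * X else cB * (D - X))"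

definition adv_obj :: "nat \<Rightarrow> real \<Rightarrow> real \<Rightarrow> real \<Rightarrow> real \<Rightarrow> (nat \<Rightarrow> real) \<Rightarrow> (nat \<Rightarrow> real) \<Rightarrow> real" where
  "adv_obj T cP cI cB bP x D =
     (\<Sum>t=1..T. max (fI T cP cI bP t (cumX x t) (D t)) (fB T cP cB bP t (cumX x t) (D t)))"

definition Ud :: "nat \<Rightarrow> (nat \<Rightarrow> real) \<Rightarrow> (nat \<Rightarrow> real) \<Rightarrow> nat \<Rightarrow> (nat \<Rightarrow> real) set" where
  "Ud T Dhat Delta Gamma =
     {D. (\<forall>t\<in>{1..<T}. D t \<le> D (Suc t)) \<and>
         (\<forall>t\<in>{1..T}. Dhat t - Delta t \<le> D t \<and> D t \<le> Dhat t + Delta t) \<and>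
         card {t\<in>{1..T}. D t \<noteq> Dhat t} \<le> Gamma}"

text \<open>Memory is an int-indexed array of reals.  Each instruction costs one step.
Indirect addresses must be integers (no floor operation on arbitrary reals).\<close>

datatype instr =
    Const int int
  | Copy int int
  | AddI int int int
  | SubI int int int
  | MulI int int int
  | DivI int int int
  | LoadInd int int
  | StoreInd int int
  | JumpLe int int nat
  | Halt

type_synonym prog = "instr list"

datatype state = Running nat "int \<Rightarrow> real" | Halted "int \<Rightarrow> real" | Failed

fun exec_instr :: "instr \<Rightarrow> nat \<Rightarrow> (int \<Rightarrow> real) \<Rightarrow> state" where
  "exec_instr (Const a c) pc M = Running (Suc pc) (M(a := real_of_int c))"
| "exec_instr (Copy a b) pc M = Running (Suc pc) (M(a := M b))"
| "exec_instr (AddI a b c) pc M = Running (Suc pc) (M(a := M b + M c))"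
| "exec_instr (SubI a b c) pc M = Running (Suc pc) (M(a := M b - M c))"
| "exec_instr (MulI a b c) pc M = Running (Suc pc) (M(a := M b * M c))"
| "exec_instr (DivI a b c) pc M =
     (if M c = 0 then Failed else Running (Suc pc) (M(a := M b / M c)))"
| "exec_instr (LoadInd a b) pc M =
     (if M b \<in> \<int> then Running (Suc pc) (M(a := M \<lfloor>M b\<rfloor>)) else Failed)"
| "exec_instr (StoreInd a b) pc M =
     (if M a \<in> \<int> then Running (Suc pc) (M(\<lfloor>M a\<rfloor> := M b)) else Failed)"
| "exec_instr (JumpLe a b k) pc M =
     (if M a \<le> M b then Running k M else Running (Suc pc) M)"
| "exec_instr Halt pc M = Halted M"

fun step :: "prog \<Rightarrow> state \<Rightarrow> state" where
  "step P (Running pc M) = (if pc < length P then exec_instr (P ! pc) pc M else Failed)"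
| "step P (Halted M) = Halted M"
| "step P Failed = Failed"

definition run :: "prog \<Rightarrow> state \<Rightarrow> nat \<Rightarrow> state" where
  "run P s n = (step P ^^ n) s"

text \<open>Input encoding: M[0] = T, M[1] = c^P, M[2] = c^I, M[3] = c^B, M[4] = b^P,
M[5] = Gamma, and for t in 1..T: M[3t+3] = x_t, M[3t+4] = nominal D_t,
M[3t+5] = Delta_t; all other cells are 0.  Output: D_t is read from M[-t].\<close>

definition input_mem ::
  "nat \<Rightarrow> real \<Rightarrow> real \<Rightarrow> real \<Rightarrow> real \<Rightarrow> nat \<Rightarrow> (nat \<Rightarrow> real) \<Rightarrow> (nat \<Rightarrow> real) \<Rightarrow> (nat \<Rightarrow> real) \<Rightarrow> int \<Rightarrow> real" where
  "input_mem T cP cI cB bP Gamma x Dhat Delta = (\<lambda>a.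
     if a = 0 then real T
     else if a = 1 then cP
     else if a = 2 then cI
     else if a = 3 then cB
     else if a = 4 then bP
     else if a = 5 then real Gamma
     else if 6 \<le> a \<and> a \<le> 3 * int T + 5 then
       (let t = nat (a div 3 - 1) in
          if a mod 3 = 0 then x t else if a mod 3 = 1 then Dhat t else Delta t)
     else 0)"

definition output_scenario :: "(int \<Rightarrow> real) \<Rightarrow> nat \<Rightarrow> real" where
  "output_scenario M = (\<lambda>t. M (- int t))"

end

theory Submission
  imports Defs
begin

fun inner :: "(nat\<Rightarrow>real) \<Rightarrow> (nat\<Rightarrow>real) \<Rightarrow> (nat\<Rightarrow>real) \<Rightarrow> real \<Rightarrow> nat \<Rightarrow> real \<times> real \<times> real" where
  "inner c bd vl cv 0 = (0,0,0)"
| "inner c bd vl cv (Suc w) = (case inner c bd vl cv w of (f,b,a) \<Rightarrow>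
     if c w \<le> cv \<and> bd w \<le> 0 \<and> (f \<le> 0 \<or> \<not> vl w \<le> b) then (1, vl w, real w) else (f,b,a))"

lemma inner_prop:
  "(case inner c bd vl cv n of (f,b,a) \<Rightarrow>
     ({w. w < n \<and> c w \<le> cv \<and> bd w \<le> 0} = {} \<longrightarrow> f = 0 \<and> b = 0 \<and> a = 0) \<and>
     ({w. w < n \<and> c w \<le> cv \<and> bd w \<le> 0} \<noteq> {} \<longrightarrow> f = 1 \<and>
        (\<exists>w. w < n \<and> c w \<le> cv \<and> bd w \<le> 0 \<and> a = real w \<and> b = vl w) \<and>
        (\<forall>w. w < n \<and> c w \<le> cv \<and> bd w \<le> 0 \<longrightarrow> vl w \<le> b)))"
proof (induction n)
  case 0
  then show ?case by simp
next
  case (Suc n)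
  obtain f b a where fba: "inner c bd vl cv n = (f,b,a)" by (cases "inner c bd vl cv n") auto
  let ?A = "{w. w < n \<and> c w \<le> cv \<and> bd w \<le> 0}"
  let ?A' = "{w. w < Suc n \<and> c w \<le> cv \<and> bd w \<le> 0}"
  have IH: "(?A = {} \<longrightarrow> f = 0 \<and> b = 0 \<and> a = 0) \<and> (?A \<noteq> {} \<longrightarrow> f = 1 \<and>
        (\<exists>w. w < n \<and> c w \<le> cv \<and> bd w \<le> 0 \<and> a = real w \<and> b = vl w) \<and>
        (\<forall>w. w < n \<and> c w \<le> cv \<and> bd w \<le> 0 \<longrightarrow> vl w \<le> b))"
    using Suc.IH fba by simp
  have A': "?A' = ?A \<union> (if c n \<le> cv \<and> bd n \<le> 0 then {n} else {})"
    by (cases "c n \<le> cv \<and> bd n \<le> 0") (auto simp: less_Suc_eq)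
  show ?case
  proof (cases "c n \<le> cv \<and> bd n \<le> 0")
    case False
    then have "?A' = ?A" using A' by auto
    then show ?thesis using IH fba False by (auto simp: less_Suc_eq)
  next
    case True
    show ?thesis
    proof (cases "?A = {}")
      case True2: True
      then have "?A' = {n}" using A' True by auto
      then show ?thesis using IH fba True True2 by auto
    next
      case False
      then have f1: "f = 1" and ex: "\<exists>w. w < n \<and> c w \<le> cv \<and> bd w \<le> 0 \<and> a = real w \<and> b = vl w"
        and mx: "\<forall>w. w < n \<and> c w \<le> cv \<and> bd w \<le> 0 \<longrightarrow> vl w \<le> b" using IH by auto
      show ?thesis
      proof (cases "vl n \<le> b")
        case True3: True
        then show ?thesis using fba True f1 ex mx by (auto simp: less_Suc_eq)
      next
        case False3: False
        then show ?thesis using fba True f1 ex mx by (auto simp: less_Suc_eq)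
      qed
    qed
  qed
qed

locale inst =
  fixes T :: nat and cP cI cB bP :: real and Gamma :: nat and x Dhat Delta :: "nat \<Rightarrow> real"
  assumes T1: "T \<ge> 1" and GT: "Gamma \<le> T"
    and Dnn: "\<forall>t\<in>{1..T}. 0 \<le> Dhat t"
    and Dmono: "\<forall>t\<in>{1..<T}. Dhat t \<le> Dhat (Suc t)"
    and Del: "\<forall>t\<in>{1..T}. 0 \<le> Delta t \<and> Delta t \<le> Dhat t"
begin

definition N :: nat where "N = 3 * T"

definition cand :: "nat \<Rightarrow> real" where
  "cand v = (if v mod 3 = 0 then Dhat (v div 3 + 1) - Delta (v div 3 + 1)
             else if v mod 3 = 1 then Dhat (v div 3 + 1) else Dhat (v div 3 + 1) + Delta (v div 3 + 1))"

definition lo :: "nat \<Rightarrow> real" where "lo t = Dhat t - Delta t"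
definition hi :: "nat \<Rightarrow> real" where "hi t = Dhat t + Delta t"

definition g :: "nat \<Rightarrow> real \<Rightarrow> real" where
  "g t c = max (fI T cP cI bP t (cumX x t) c) (fB T cP cB bP t (cumX x t) c)"

definition dev :: "nat \<Rightarrow> nat \<Rightarrow> nat" where
  "dev t v = (if cand v = Dhat t then 0 else 1)"

fun tab :: "nat \<Rightarrow> nat \<Rightarrow> nat \<Rightarrow> real \<times> real \<times> real" where
  "tab 0 v k = (0,0,0)"
| "tab (Suc t) v k = (if lo (Suc t) \<le> cand v \<and> cand v \<le> hi (Suc t) \<and> dev (Suc t) v \<le> k then
      (case inner cand (\<lambda>w. fst (tab t w (k - dev (Suc t) v))) (\<lambda>w. fst (snd (tab t w (k - dev (Suc t) v)))) (cand v) N of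
         (f,b,a) \<Rightarrow> if f \<le> 0 then (1,0,0) else (0, g (Suc t) (cand v) + b, a))
     else (1,0,0))"

fun bt :: "nat \<Rightarrow> nat \<Rightarrow> nat \<Rightarrow> nat \<Rightarrow> nat" where
  "bt 0 v k = (\<lambda>i. v)"
| "bt (Suc t) v k = (bt t (nat \<lfloor>snd (snd (tab (Suc t) v k))\<rfloor>) (k - dev (Suc t) v))(Suc t := v)"

definition valid :: "nat \<Rightarrow> (nat \<Rightarrow> nat) \<Rightarrow> nat \<Rightarrow> bool" where
  "valid t s k \<longleftrightarrow> (\<forall>i\<in>{1..t}. s i < N \<and> lo i \<le> cand (s i) \<and> cand (s i) \<le> hi i) \<and>
     (\<forall>i\<in>{1..<t}. cand (s i) \<le> cand (s (Suc i))) \<and> card {i\<in>{1..t}. cand (s i) \<noteq> Dhat i} \<le> k"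

definition val :: "nat \<Rightarrow> (nat \<Rightarrow> nat) \<Rightarrow> real" where
  "val t s = (\<Sum>i=1..t. g i (cand (s i)))"

lemma N_pos: "N > 0" using T1 by (simp add: N_def)

lemma card_step: "card {i\<in>{1..Suc t}. cand (s i) \<noteq> Dhat i} = card {i\<in>{1..t}. cand (s i) \<noteq> Dhat i} + dev (Suc t) (s (Suc t))"
proof -
  have "{i\<in>{1..Suc t}. cand (s i) \<noteq> Dhat i} = {i\<in>{1..t}. cand (s i) \<noteq> Dhat i} \<union> (if cand (s (Suc t)) \<noteq> Dhat (Suc t) then {Suc t} else {})"
    by (auto simp: le_Suc_eq)
  then show ?thesis by (auto simp: dev_def)
qed

lemma valid_Suc:
  "valid (Suc t) s k \<longleftrightarrow> valid t s (k - dev (Suc t) (s (Suc t))) \<and> dev (Suc t) (s (Suc t)) \<le> k \<and>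
     s (Suc t) < N \<and> lo (Suc t) \<le> cand (s (Suc t)) \<and> cand (s (Suc t)) \<le> hi (Suc t) \<and>
     (t \<ge> 1 \<longrightarrow> cand (s t) \<le> cand (s (Suc t)))"
proof -
  let ?d = "dev (Suc t) (s (Suc t))"
  have A: "(\<forall>i\<in>{1..Suc t}. s i < N \<and> lo i \<le> cand (s i) \<and> cand (s i) \<le> hi i) \<longleftrightarrow>
     (\<forall>i\<in>{1..t}. s i < N \<and> lo i \<le> cand (s i) \<and> cand (s i) \<le> hi i) \<and>
     s (Suc t) < N \<and> lo (Suc t) \<le> cand (s (Suc t)) \<and> cand (s (Suc t)) \<le> hi (Suc t)"
    by (auto simp: le_Suc_eq)
  have B: "(\<forall>i\<in>{1..<Suc t}. cand (s i) \<le> cand (s (Suc i))) \<longleftrightarrow>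
     (\<forall>i\<in>{1..<t}. cand (s i) \<le> cand (s (Suc i))) \<and> (t \<ge> 1 \<longrightarrow> cand (s t) \<le> cand (s (Suc t)))"
    by (auto simp: less_Suc_eq)
  have C: "card {i\<in>{1..Suc t}. cand (s i) \<noteq> Dhat i} \<le> k \<longleftrightarrow>
     card {i\<in>{1..t}. cand (s i) \<noteq> Dhat i} \<le> k - ?d \<and> ?d \<le> k"
    unfolding card_step by (auto simp: dev_def)
  show ?thesis unfolding valid_def A B C by blast
qed

lemma val_Suc: "val (Suc t) s = val t s + g (Suc t) (cand (s (Suc t)))"
  by (simp add: val_def)

lemma valid_cong: "(\<And>i. 1 \<le> i \<Longrightarrow> i \<le> t \<Longrightarrow> s i = s' i) \<Longrightarrow> valid t s k = valid t s' k"
proof -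
  assume h: "\<And>i. 1 \<le> i \<Longrightarrow> i \<le> t \<Longrightarrow> s i = s' i"
  have "{i\<in>{1..t}. cand (s i) \<noteq> Dhat i} = {i\<in>{1..t}. cand (s' i) \<noteq> Dhat i}" using h by auto
  moreover have "(\<forall>i\<in>{1..<t}. cand (s i) \<le> cand (s (Suc i))) = (\<forall>i\<in>{1..<t}. cand (s' i) \<le> cand (s' (Suc i)))"
    using h by auto
  moreover have "(\<forall>i\<in>{1..t}. s i < N \<and> lo i \<le> cand (s i) \<and> cand (s i) \<le> hi i) =
     (\<forall>i\<in>{1..t}. s' i < N \<and> lo i \<le> cand (s' i) \<and> cand (s' i) \<le> hi i)" using h by auto
  ultimately show ?thesis unfolding valid_def by simp
qed

lemma val_cong: "(\<And>i. 1 \<le> i \<Longrightarrow> i \<le> t \<Longrightarrow> s i = s' i) \<Longrightarrow> val t s = val t s'"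
  unfolding val_def by (rule sum.cong) auto

definition tabP :: "nat \<Rightarrow> nat \<Rightarrow> nat \<Rightarrow> bool" where
  "tabP t v k \<longleftrightarrow> (fst (tab t v k) = 0 \<or> fst (tab t v k) = 1) \<and>
     (\<exists>w<N. snd (snd (tab t v k)) = real w) \<and>
     (fst (tab t v k) \<le> 0 \<longleftrightarrow> (\<exists>s. valid t s k \<and> s t = v)) \<and>
     (fst (tab t v k) \<le> 0 \<longrightarrow> valid t (bt t v k) k \<and> bt t v k t = v \<and>
        val t (bt t v k) = fst (snd (tab t v k)) \<and>
        (\<forall>s. valid t s k \<and> s t = v \<longrightarrow> val t s \<le> fst (snd (tab t v k))))"

lemma tab0: "tabP 0 v k"
proof -
  have "valid 0 (\<lambda>i. v) k" by (simp add: valid_def)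
  then show ?thesis unfolding tabP_def using N_pos by (auto simp: val_def valid_def intro!: exI[of _ 0])
qed

lemma tab_step:
  assumes IH: "\<And>w kk. w < N \<Longrightarrow> tabP t w kk" and v: "v < N"
  shows "tabP (Suc t) v k"
proof -
  define d where "d = dev (Suc t) v"
  define cv where "cv = cand v"
  define kk where "kk = k - d"
  define bd where "bd = (\<lambda>w. fst (tab t w kk))"
  define vl where "vl = (\<lambda>w. fst (snd (tab t w kk)))"
  define A where "A = {w. w < N \<and> cand w \<le> cv \<and> bd w \<le> 0}"
  have key: "lo (Suc t) \<le> cv \<and> cv \<le> hi (Suc t) \<and> d \<le> k \<and>
      (\<exists>w s'. w \<in> A \<and> valid t s' kk \<and> s' t = w \<and> val t s' = val t s)"
    if vs: "valid (Suc t) s k" and sv: "s (Suc t) = v" for s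
  proof -
    have vs': "valid t s kk" and dk: "d \<le> k" and bnds: "lo (Suc t) \<le> cv \<and> cv \<le> hi (Suc t)"
      and mono: "t \<ge> 1 \<longrightarrow> cand (s t) \<le> cv"
      using vs unfolding valid_Suc sv d_def kk_def cv_def by auto
    define w where "w = (if t = 0 then v else s t)"
    define s' where "s' = s(t := w)"
    have eq: "s i = s' i" if "1 \<le> i" "i \<le> t" for i
      using that by (auto simp: s'_def w_def)
    have v': "valid t s' kk" using vs' valid_cong[of t s s' kk] eq by simp
    have val': "val t s' = val t s" using val_cong[of t s s'] eq by simp
    have wN: "w < N"
    proof (cases "t = 0")
      case True then show ?thesis using v by (simp add: w_def)
    next
      case False then show ?thesis using vs' by (auto simp: w_def valid_def)
    qed
    have wc: "cand w \<le> cv" using mono by (auto simp: w_def cv_def)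
    have "s' t = w" by (simp add: s'_def)
    then have "bd w \<le> 0" using IH[OF wN, of kk] v' unfolding tabP_def bd_def by blast
    then have "w \<in> A" using wN wc by (simp add: A_def)
    then show ?thesis using dk bnds v' val' \<open>s' t = w\<close> by blast
  qed
  show ?thesis
  proof (cases "lo (Suc t) \<le> cv \<and> cv \<le> hi (Suc t) \<and> d \<le> k")
    case False
    then have tb: "tab (Suc t) v k = (1,0,0)" using False by (auto simp: cv_def d_def)
    have "\<not> (\<exists>s. valid (Suc t) s k \<and> s (Suc t) = v)" using key False by blast
    then show ?thesis unfolding tabP_def tb using N_pos by (auto intro!: exI[of _ 0])
  next
    case True
    obtain f b a where fba: "inner cand bd vl cv N = (f,b,a)" by (cases "inner cand bd vl cv N") auto
    have tb: "tab (Suc t) v k = (if f \<le> 0 then (1,0,0) else (0, g (Suc t) cv + b, a))"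
      using True fba by (simp add: cv_def d_def kk_def bd_def vl_def)
    have ip: "(A = {} \<longrightarrow> f = 0 \<and> b = 0 \<and> a = 0) \<and> (A \<noteq> {} \<longrightarrow> f = 1 \<and>
        (\<exists>w. w \<in> A \<and> a = real w \<and> b = vl w) \<and> (\<forall>w\<in>A. vl w \<le> b))"
      using inner_prop[where c=cand and bd=bd and vl=vl and cv=cv and n=N] fba unfolding A_def by auto
    show ?thesis
    proof (cases "A = {}")
      case True
      then have tb': "tab (Suc t) v k = (1,0,0)" using tb ip by simp
      have "\<not> (\<exists>s. valid (Suc t) s k \<and> s (Suc t) = v)" using key True by blast
      then show ?thesis unfolding tabP_def tb' using N_pos by (auto intro!: exI[of _ 0])
    next
      case False
      then obtain ws where wsA: "ws \<in> A" and a: "a = real ws" and b: "b = vl ws" and mx: "\<forall>w\<in>A. vl w \<le> b"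
        and f1: "f = 1" using ip by blast
      have tb': "tab (Suc t) v k = (0, g (Suc t) cv + b, a)" using tb f1 by simp
      have wsN: "ws < N" and wsc: "cand ws \<le> cv" and bdws: "bd ws \<le> 0" using wsA by (auto simp: A_def)
      have P: "tabP t ws kk" using IH wsN by blast
      have bt1: "valid t (bt t ws kk) kk" "bt t ws kk t = ws" "val t (bt t ws kk) = vl ws"
        using P bdws unfolding tabP_def bd_def vl_def by blast+
      define s0 where "s0 = (bt t ws kk)(Suc t := v)"
      have bts: "bt (Suc t) v k = s0" using tb' a by (simp add: s0_def d_def kk_def)
      have eq0: "bt t ws kk i = s0 i" if "1 \<le> i" "i \<le> t" for i using that by (simp add: s0_def)
      have v0: "valid t s0 kk" using bt1(1) valid_cong[of t "bt t ws kk" s0 kk] eq0 by simp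
      have val0: "val t s0 = vl ws" using bt1(3) val_cong[of t "bt t ws kk" s0] eq0 by simp
      have s0t: "t \<ge> 1 \<longrightarrow> s0 t = ws" using bt1(2) by (simp add: s0_def)
      have vS: "valid (Suc t) s0 k"
        unfolding valid_Suc using v0 True v wsc s0t
        by (simp add: s0_def d_def kk_def cv_def)
      have valS: "val (Suc t) s0 = g (Suc t) cv + b"
        using val0 b by (simp add: val_Suc s0_def cv_def)
      have opt: "val (Suc t) s \<le> g (Suc t) cv + b" if hs: "valid (Suc t) s k" "s (Suc t) = v" for s
      proof -
        obtain w s' where "w \<in> A" "valid t s' kk" "s' t = w" "val t s' = val t s"
          using key[OF hs] by blast
        moreover have "w < N" using \<open>w \<in> A\<close> by (simp add: A_def)
        ultimately have "val t s \<le> vl w" using IH[of w kk] unfolding tabP_def vl_def bd_def A_def by auto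
        moreover have "vl w \<le> b" using mx \<open>w \<in> A\<close> by blast
        ultimately show ?thesis using hs(2) by (simp add: val_Suc cv_def)
      qed
      show ?thesis unfolding tabP_def tb' bts using vS valS opt wsN a
        by (auto simp: s0_def)
    qed
  qed
qed

lemma tab_all: "v < N \<Longrightarrow> tabP t v k"
proof (induction t arbitrary: v k)
  case 0 then show ?case using tab0 by blast
next
  case (Suc t) then show ?case using tab_step by blast
qed

definition V :: "real set" where "V = cand ` {..<N}"

lemma in_V: assumes "t \<in> {1..T}" shows "lo t \<in> V" "hi t \<in> V" "Dhat t \<in> V"
proof -
  obtain m where m: "t = Suc m" "m < T" using assms by (cases t) auto
  have a: "3*m < N" "3*m+1 < N" "3*m+2 < N" using m by (auto simp: N_def)
  have dm: "(3*m+1) div 3 = m" "(3*m+1) mod 3 = 1" "(3*m+2) div 3 = m" "(3*m+2) mod 3 = 2" by presburger+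
  have "cand (3*m) = lo t" "cand (3*m+1) = Dhat t" "cand (3*m+2) = hi t"
    using m unfolding cand_def lo_def hi_def dm by auto
  then show "lo t \<in> V" "hi t \<in> V" "Dhat t \<in> V" using a unfolding V_def
    by (metis image_eqI lessThan_iff)+
qed

abbreviation "UU \<equiv> Ud T Dhat Delta Gamma"
abbreviation "obj D \<equiv> adv_obj T cP cI cB bP x D"

lemma obj_eq: "obj D = (\<Sum>t=1..T. g t (D t))"
  by (simp add: adv_obj_def g_def)

definition nonV :: "(nat \<Rightarrow> real) \<Rightarrow> real set" where "nonV D = D ` {1..T} - V"

lemma shift_in_Ud:
  assumes D: "D \<in> UU" and aV: "\<alpha> \<notin> V" and B: "B = {t\<in>{1..T}. D t = \<alpha>}"
    and bnd: "\<forall>t\<in>B. lo t \<le> \<beta> \<and> \<beta> \<le> hi t"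
    and up: "\<forall>s\<in>{1..T}. \<alpha> < D s \<longrightarrow> \<beta> \<le> D s"
    and dn: "\<forall>s\<in>{1..T}. D s < \<alpha> \<longrightarrow> D s \<le> \<beta>"
  shows "(\<lambda>t. if t \<in> B then \<beta> else D t) \<in> UU"
proof -
  let ?D = "\<lambda>t. if t \<in> B then \<beta> else D t"
  have mono: "\<forall>t\<in>{1..<T}. D t \<le> D (Suc t)"
    and bds: "\<forall>t\<in>{1..T}. Dhat t - Delta t \<le> D t \<and> D t \<le> Dhat t + Delta t"
    and cd: "card {t\<in>{1..T}. D t \<noteq> Dhat t} \<le> Gamma" using D by (auto simp: Ud_def)
  have m2: "?D t \<le> ?D (Suc t)" if t: "t \<in> {1..<T}" for t
  proof -
    have le: "D t \<le> D (Suc t)" using mono t by blast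
    have tT: "t \<in> {1..T}" "Suc t \<in> {1..T}" using t by auto
    show ?thesis
    proof (cases "t \<in> B"; cases "Suc t \<in> B")
      assume "t \<in> B" "Suc t \<notin> B"
      then have "D t = \<alpha>" "D (Suc t) \<noteq> \<alpha>" using B tT by auto
      then have "\<alpha> < D (Suc t)" using le by auto
      then show ?thesis using up tT \<open>t \<in> B\<close> \<open>Suc t \<notin> B\<close> by auto
    next
      assume "t \<notin> B" "Suc t \<in> B"
      then have "D t \<noteq> \<alpha>" "D (Suc t) = \<alpha>" using B tT by auto
      then have "D t < \<alpha>" using le by auto
      then show ?thesis using dn tT \<open>t \<notin> B\<close> \<open>Suc t \<in> B\<close> by auto
    qed (use le in auto)
  qed
  have b2: "Dhat t - Delta t \<le> ?D t \<and> ?D t \<le> Dhat t + Delta t" if t: "t \<in> {1..T}" for t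
    using bds bnd t by (auto simp: lo_def hi_def)
  have sub: "{t\<in>{1..T}. ?D t \<noteq> Dhat t} \<subseteq> {t\<in>{1..T}. D t \<noteq> Dhat t}"
  proof
    fix t assume "t \<in> {t\<in>{1..T}. ?D t \<noteq> Dhat t}"
    then have t: "t \<in> {1..T}" and ne: "?D t \<noteq> Dhat t" by auto
    show "t \<in> {t\<in>{1..T}. D t \<noteq> Dhat t}"
    proof (cases "t \<in> B")
      case True
      then have "D t = \<alpha>" using B by auto
      moreover have "Dhat t \<in> V" using in_V t by blast
      ultimately show ?thesis using aV t by auto
    next
      case False then show ?thesis using t ne by auto
    qed
  qed
  have "card {t\<in>{1..T}. ?D t \<noteq> Dhat t} \<le> card {t\<in>{1..T}. D t \<noteq> Dhat t}"
    by (rule card_mono[OF _ sub]) simp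
  then show ?thesis using m2 b2 cd unfolding Ud_def by auto
qed

lemma shift_nonV:
  assumes a: "\<alpha> \<in> nonV D" and B: "B = {t\<in>{1..T}. D t = \<alpha>}" and ne: "\<beta> \<noteq> \<alpha>"
    and bv: "\<beta> \<in> V \<or> (\<exists>s\<in>{1..T}. s \<notin> B \<and> D s = \<beta>)"
  shows "nonV (\<lambda>t. if t \<in> B then \<beta> else D t) \<subset> nonV D"
proof -
  let ?D = "\<lambda>t. if t \<in> B then \<beta> else D t"
  have "nonV ?D \<subseteq> nonV D"
  proof
    fix y assume "y \<in> nonV ?D"
    then obtain t where t: "t \<in> {1..T}" "y = ?D t" "y \<notin> V" unfolding nonV_def by blast
    show "y \<in> nonV D"
    proof (cases "t \<in> B")
      case True
      then have yb: "y = \<beta>" using t by simp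
      then have "\<beta> \<notin> V" using t by simp
      then obtain s where s: "s \<in> {1..T}" "D s = \<beta>" using bv by blast
      have "y \<in> D ` {1..T}" using s yb by (metis image_eqI)
      then show ?thesis using t(3) unfolding nonV_def by blast
    next
      case False
      then have "y = D t" using t by simp
      then have "y \<in> D ` {1..T}" using t(1) by blast
      then show ?thesis using t(3) unfolding nonV_def by blast
    qed
  qed
  moreover have "\<alpha> \<notin> nonV ?D"
  proof
    assume "\<alpha> \<in> nonV ?D"
    then obtain t where t: "t \<in> {1..T}" "\<alpha> = ?D t" unfolding nonV_def by blast
    show False
    proof (cases "t \<in> B")
      case True then show False using t ne by simp
    next
      case False
      then have "D t \<noteq> \<alpha>" using t(1) B by blast
      then show False using t False by simp
    qed
  qed
  ultimately show ?thesis using a by blast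
qed

lemma fI_aff: "fI T cP cI bP t X (l*u + (1-l)*w) = l * fI T cP cI bP t X u + (1-l) * fI T cP cI bP t X w"
  by (simp add: fI_def algebra_simps)

lemma fB_aff: "fB T cP cB bP t X (l*u + (1-l)*w) = l * fB T cP cB bP t X u + (1-l) * fB T cP cB bP t X w"
  by (simp add: fB_def algebra_simps)

lemma max_conv:
  fixes a b c d l :: real
  assumes "0 \<le> l" "l \<le> 1"
  shows "max (l*a + (1-l)*b) (l*c + (1-l)*d) \<le> l * max a c + (1-l) * max b d"
proof -
  have "l*a \<le> l * max a c" "l*c \<le> l * max a c" using assms by (auto intro: mult_left_mono)
  moreover have "(1-l)*b \<le> (1-l) * max b d" "(1-l)*d \<le> (1-l) * max b d" using assms by (auto intro: mult_left_mono)
  ultimately show ?thesis by (simp add: max_def)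
qed

lemma g_conv: "0 \<le> l \<Longrightarrow> l \<le> 1 \<Longrightarrow> g t (l*u + (1-l)*w) \<le> l * g t u + (1-l) * g t w"
  unfolding g_def fI_aff fB_aff by (rule max_conv)

lemma vertex_step:
  assumes D: "D \<in> UU" and ne: "nonV D \<noteq> {}"
  shows "\<exists>D'\<in>UU. obj D \<le> obj D' \<and> nonV D' \<subset> nonV D"
proof -
  obtain \<alpha> where a: "\<alpha> \<in> nonV D" using ne by blast
  then have aV: "\<alpha> \<notin> V" and "\<alpha> \<in> D ` {1..T}" unfolding nonV_def by auto
  then obtain t0 where t0: "t0 \<in> {1..T}" "D t0 = \<alpha>" by auto
  define B where "B = {t\<in>{1..T}. D t = \<alpha>}"
  have t0B: "t0 \<in> B" using t0 by (simp add: B_def)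
  have bds: "\<forall>t\<in>{1..T}. lo t \<le> D t \<and> D t \<le> hi t" using D by (auto simp: Ud_def lo_def hi_def)
  have strict: "lo t < \<alpha> \<and> \<alpha> < hi t" if "t \<in> B" for t
  proof -
    have t: "t \<in> {1..T}" "D t = \<alpha>" using that by (auto simp: B_def)
    then have "lo t \<in> V" "hi t \<in> V" using in_V by auto
    then have "lo t \<noteq> \<alpha>" "hi t \<noteq> \<alpha>" using aV by auto
    then show ?thesis using bds t by force
  qed
  define Up where "Up = hi ` B \<union> D ` {s\<in>{1..T}. \<alpha> < D s}"
  define Dn where "Dn = lo ` B \<union> D ` {s\<in>{1..T}. D s < \<alpha>}"
  have fUp: "finite Up" "Up \<noteq> {}" using t0B by (auto simp: Up_def B_def)
  have fDn: "finite Dn" "Dn \<noteq> {}" using t0B by (auto simp: Dn_def B_def)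
  define \<beta> where "\<beta> = Min Up"
  define \<gamma> where "\<gamma> = Max Dn"
  have bUp: "\<beta> \<in> Up" using fUp by (simp add: \<beta>_def)
  have gDn: "\<gamma> \<in> Dn" using fDn by (simp add: \<gamma>_def)
  have bmin: "\<And>u. u \<in> Up \<Longrightarrow> \<beta> \<le> u" using fUp by (simp add: \<beta>_def)
  have gmax: "\<And>u. u \<in> Dn \<Longrightarrow> u \<le> \<gamma>" using fDn by (simp add: \<gamma>_def)
  have allUp: "\<And>u. u \<in> Up \<Longrightarrow> \<alpha> < u" using strict by (auto simp: Up_def)
  have allDn: "\<And>u. u \<in> Dn \<Longrightarrow> u < \<alpha>" using strict by (auto simp: Dn_def)
  have ab: "\<alpha> < \<beta>" using allUp bUp by blast
  have ga: "\<gamma> < \<alpha>" using allDn gDn by blast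
  define Db where "Db = (\<lambda>t. if t \<in> B then \<beta> else D t)"
  define Dg where "Dg = (\<lambda>t. if t \<in> B then \<gamma> else D t)"
  have hiUp: "\<And>t. t \<in> B \<Longrightarrow> hi t \<in> Up" by (simp add: Up_def)
  have loDn: "\<And>t. t \<in> B \<Longrightarrow> lo t \<in> Dn" by (simp add: Dn_def)
  have DUp: "\<And>s. s \<in> {1..T} \<Longrightarrow> \<alpha> < D s \<Longrightarrow> D s \<in> Up" by (simp add: Up_def)
  have DDn: "\<And>s. s \<in> {1..T} \<Longrightarrow> D s < \<alpha> \<Longrightarrow> D s \<in> Dn" by (simp add: Dn_def)
  have Db_U: "Db \<in> UU" unfolding Db_def
  proof (rule shift_in_Ud[OF D aV B_def])
    show "\<forall>t\<in>B. lo t \<le> \<beta> \<and> \<beta> \<le> hi t" using strict ab bmin hiUp by (meson less_trans less_imp_le)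
    show "\<forall>s\<in>{1..T}. \<alpha> < D s \<longrightarrow> \<beta> \<le> D s" using bmin DUp by blast
    show "\<forall>s\<in>{1..T}. D s < \<alpha> \<longrightarrow> D s \<le> \<beta>" using ab by auto
  qed
  have Dg_U: "Dg \<in> UU" unfolding Dg_def
  proof (rule shift_in_Ud[OF D aV B_def])
    show "\<forall>t\<in>B. lo t \<le> \<gamma> \<and> \<gamma> \<le> hi t" using strict ga gmax loDn by (meson less_trans less_imp_le)
    show "\<forall>s\<in>{1..T}. \<alpha> < D s \<longrightarrow> \<gamma> \<le> D s" using ga by auto
    show "\<forall>s\<in>{1..T}. D s < \<alpha> \<longrightarrow> D s \<le> \<gamma>" using gmax DDn by blast
  qed
  have Db_n: "nonV Db \<subset> nonV D" unfolding Db_def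
  proof (rule shift_nonV[OF a B_def])
    show "\<beta> \<noteq> \<alpha>" using ab by simp
    show "\<beta> \<in> V \<or> (\<exists>s\<in>{1..T}. s \<notin> B \<and> D s = \<beta>)"
    proof (cases "\<beta> \<in> hi ` B")
      case True
      then obtain t where "t \<in> B" "\<beta> = hi t" by blast
      then have "t \<in> {1..T}" by (simp add: B_def)
      then show ?thesis using in_V \<open>\<beta> = hi t\<close> by blast
    next
      case False
      then obtain s where "s \<in> {1..T}" "\<alpha> < D s" "\<beta> = D s" using bUp by (auto simp: Up_def)
      then have "s \<notin> B" by (auto simp: B_def)
      then show ?thesis using \<open>s \<in> {1..T}\<close> \<open>\<beta> = D s\<close> by blast
    qed
  qed
  have Dg_n: "nonV Dg \<subset> nonV D" unfolding Dg_def
  proof (rule shift_nonV[OF a B_def])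
    show "\<gamma> \<noteq> \<alpha>" using ga by simp
    show "\<gamma> \<in> V \<or> (\<exists>s\<in>{1..T}. s \<notin> B \<and> D s = \<gamma>)"
    proof (cases "\<gamma> \<in> lo ` B")
      case True
      then obtain t where "t \<in> B" "\<gamma> = lo t" by blast
      then have "t \<in> {1..T}" by (simp add: B_def)
      then show ?thesis using in_V \<open>\<gamma> = lo t\<close> by blast
    next
      case False
      then obtain s where "s \<in> {1..T}" "D s < \<alpha>" "\<gamma> = D s" using gDn by (auto simp: Dn_def)
      then have "s \<notin> B" by (auto simp: B_def)
      then show ?thesis using \<open>s \<in> {1..T}\<close> \<open>\<gamma> = D s\<close> by blast
    qed
  qed
  define l where "l = (\<beta> - \<alpha>) / (\<beta> - \<gamma>)"
  have l01: "0 \<le> l" "l \<le> 1" using ab ga by (auto simp: l_def divide_simps)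
  have aeq: "\<alpha> = l * \<gamma> + (1 - l) * \<beta>"
  proof -
    have ne0: "\<beta> - \<gamma> \<noteq> 0" using ab ga by simp
    have h: "l * (\<beta> - \<gamma>) = \<beta> - \<alpha>" using ne0 by (simp add: l_def)
    have h2: "l * (\<beta> - \<gamma>) = l * \<beta> - l * \<gamma>" "(1 - l) * \<beta> = \<beta> - l * \<beta>" by (simp_all add: algebra_simps)
    show ?thesis using h h2 by linarith
  qed
  have pw: "g t (D t) \<le> l * g t (Dg t) + (1 - l) * g t (Db t)" for t
  proof (cases "t \<in> B")
    case True
    then have "D t = \<alpha>" by (simp add: B_def)
    then show ?thesis using True g_conv[OF l01, of t \<gamma> \<beta>] aeq by (simp add: Db_def Dg_def)
  next
    case False
    then show ?thesis by (simp add: Db_def Dg_def algebra_simps)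
  qed
  have "obj D \<le> (\<Sum>t=1..T. l * g t (Dg t) + (1 - l) * g t (Db t))"
    unfolding obj_eq by (rule sum_mono) (rule pw)
  also have "\<dots> = l * obj Dg + (1 - l) * obj Db"
    unfolding obj_eq by (simp add: sum.distrib sum_distrib_left)
  finally have c: "obj D \<le> l * obj Dg + (1 - l) * obj Db" .
  show ?thesis
  proof (cases "obj Dg \<le> obj Db")
    case True
    have "l * obj Dg + (1 - l) * obj Db \<le> l * obj Db + (1 - l) * obj Db"
      using True l01 by (simp add: mult_left_mono)
    then have "obj D \<le> obj Db" using c by (simp add: algebra_simps)
    then show ?thesis using Db_U Db_n by blast
  next
    case False
    have "l * obj Dg + (1 - l) * obj Db \<le> l * obj Dg + (1 - l) * obj Dg"
      using False l01 by (simp add: mult_left_mono)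
    then have "obj D \<le> obj Dg" using c by (simp add: algebra_simps)
    then show ?thesis using Dg_U Dg_n by blast
  qed
qed

lemma vertex: "D \<in> UU \<Longrightarrow> \<exists>D'\<in>UU. obj D \<le> obj D' \<and> nonV D' = {}"
proof (induction D rule: measure_induct_rule[where f="\<lambda>D. card (nonV D)"])
  case (less D)
  show ?case
  proof (cases "nonV D = {}")
    case True then show ?thesis using less.prems by blast
  next
    case False
    obtain D1 where D1: "D1 \<in> UU" "obj D \<le> obj D1" "nonV D1 \<subset> nonV D"
      using vertex_step[OF less.prems False] by blast
    have "finite (nonV D)" by (simp add: nonV_def)
    then have "card (nonV D1) < card (nonV D)" using D1(3) by (rule psubset_card_mono)
    then obtain D2 where "D2 \<in> UU" "obj D1 \<le> obj D2" "nonV D2 = {}" using less.IH D1(1) by blast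
    moreover have "obj D \<le> obj D2" using D1(2) \<open>obj D1 \<le> obj D2\<close> by linarith
    ultimately show ?thesis by blast
  qed
qed

lemma vertex_seq:
  assumes D: "D \<in> UU" shows "\<exists>s. valid T s Gamma \<and> obj D \<le> val T s"
proof -
  obtain D' where D': "D' \<in> UU" "obj D \<le> obj D'" "nonV D' = {}" using vertex[OF D] by blast
  define s where "s = (\<lambda>t. SOME v. v < N \<and> cand v = D' t)"
  have sp: "s t < N \<and> cand (s t) = D' t" if "t \<in> {1..T}" for t
  proof -
    have "D' t \<in> V" using D'(3) that unfolding nonV_def by blast
    then have "\<exists>v. v < N \<and> cand v = D' t" unfolding V_def by auto
    then show ?thesis unfolding s_def by (rule someI_ex)
  qed
  have U: "(\<forall>t\<in>{1..<T}. D' t \<le> D' (Suc t))"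
     "(\<forall>t\<in>{1..T}. Dhat t - Delta t \<le> D' t \<and> D' t \<le> Dhat t + Delta t)"
     "card {t\<in>{1..T}. D' t \<noteq> Dhat t} \<le> Gamma" using D'(1) by (auto simp: Ud_def)
  have "{i\<in>{1..T}. cand (s i) \<noteq> Dhat i} = {t\<in>{1..T}. D' t \<noteq> Dhat t}" using sp by auto
  then have "valid T s Gamma" unfolding valid_def using sp U by (auto simp: lo_def hi_def)
  moreover have "val T s = obj D'" unfolding obj_eq val_def by (rule sum.cong) (auto simp: sp)
  ultimately show ?thesis using D'(2) by auto
qed

lemma valid_Ud: assumes "valid T s Gamma" "\<forall>t\<in>{1..T}. D t = cand (s t)"
  shows "D \<in> UU" "obj D = val T s"
proof -
  have "{t\<in>{1..T}. D t \<noteq> Dhat t} = {i\<in>{1..T}. cand (s i) \<noteq> Dhat i}" using assms(2) by auto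
  then show "D \<in> UU" using assms unfolding valid_def Ud_def by (auto simp: lo_def hi_def)
  show "obj D = val T s" unfolding obj_eq val_def by (rule sum.cong) (auto simp: assms(2))
qed

lemma hat_valid: "valid T (\<lambda>t. 3*(t-1)+1) Gamma"
proof -
  have c: "cand (3*(t-1)+1) = Dhat t" if t1: "1 \<le> t" for t
  proof -
    obtain m where m: "t = Suc m" using t1 by (cases t) simp_all
    have dm: "(3*m+1) div 3 = m" "(3*m+1) mod 3 = 1" by presburger+
    show ?thesis unfolding cand_def m using dm by simp
  qed
  have e: "{i\<in>{1..T}. cand (3*(i-1)+1) \<noteq> Dhat i} = {}" using c by auto
  have m: "\<forall>i\<in>{1..<T}. cand (3*(i-1)+1) \<le> cand (3*(Suc i-1)+1)"
  proof
    fix i assume i: "i \<in> {1..<T}"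
    then have "cand (3*(i-1)+1) = Dhat i" "cand (3*(Suc i-1)+1) = Dhat (Suc i)" using c[of i] c[of "Suc i"] by auto
    then show "cand (3*(i-1)+1) \<le> cand (3*(Suc i-1)+1)" using Dmono i by simp
  qed
  have b: "\<forall>i\<in>{1..T}. 3*(i-1)+1 < N \<and> lo i \<le> cand (3*(i-1)+1) \<and> cand (3*(i-1)+1) \<le> hi i"
  proof
    fix i assume i: "i \<in> {1..T}"
    then have "cand (3*(i-1)+1) = Dhat i" using c by auto
    then show "3*(i-1)+1 < N \<and> lo i \<le> cand (3*(i-1)+1) \<and> cand (3*(i-1)+1) \<le> hi i"
      using Del i by (auto simp: N_def lo_def hi_def)
  qed
  show ?thesis unfolding valid_def e using m b by simp
qed

lemma final_opt:
  assumes Cm: "\<forall>w<N. cand w \<le> Cmax"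
    and fba: "inner cand (\<lambda>w. fst (tab T w Gamma)) (\<lambda>w. fst (snd (tab T w Gamma))) Cmax N = (f,b,a)"
  shows "\<exists>ws<N. a = real ws \<and> fst (tab T ws Gamma) \<le> 0 \<and> (\<forall>D'. (\<forall>t\<in>{1..T}. D' t = cand (bt T ws Gamma t)) \<longrightarrow>
            D' \<in> UU \<and> (\<forall>D\<in>UU. obj D \<le> obj D'))"
proof -
  let ?A = "{w. w < N \<and> cand w \<le> Cmax \<and> fst (tab T w Gamma) \<le> 0}"
  have hv: "valid T (\<lambda>t. 3*(t-1)+1) Gamma" by (rule hat_valid)
  have hN: "3*(T-1)+1 < N" using T1 by (simp add: N_def)
  have "fst (tab T (3*(T-1)+1) Gamma) \<le> 0" using tab_all[OF hN, of T Gamma] hv unfolding tabP_def by blast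
  then have "?A \<noteq> {}" using hN Cm by blast
  then obtain ws where ws: "ws \<in> ?A" "a = real ws" "b = fst (snd (tab T ws Gamma))"
    and mx: "\<forall>w\<in>?A. fst (snd (tab T w Gamma)) \<le> b"
    using inner_prop[where c=cand and bd="\<lambda>w. fst (tab T w Gamma)" and vl="\<lambda>w. fst (snd (tab T w Gamma))" and cv=Cmax and n=N] fba
    by auto
  have wsN: "ws < N" using ws by simp
  have P: "tabP T ws Gamma" using tab_all[OF wsN] .
  have bt1: "valid T (bt T ws Gamma) Gamma" "val T (bt T ws Gamma) = b"
    using P ws unfolding tabP_def by auto
  have "\<forall>D'. (\<forall>t\<in>{1..T}. D' t = cand (bt T ws Gamma t)) \<longrightarrow> D' \<in> UU \<and> (\<forall>D\<in>UU. obj D \<le> obj D')"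
  proof (intro allI impI conjI ballI)
    fix D' assume h: "\<forall>t\<in>{1..T}. D' t = cand (bt T ws Gamma t)"
    show "D' \<in> UU" using valid_Ud(1)[OF bt1(1) h] .
    have oD': "obj D' = b" using valid_Ud(2)[OF bt1(1) h] bt1(2) by simp
    fix D assume D: "D \<in> UU"
    obtain s where s: "valid T s Gamma" "obj D \<le> val T s" using vertex_seq[OF D] by blast
    have sTN: "s T < N" using s(1) T1 unfolding valid_def by auto
    have PT: "tabP T (s T) Gamma" using tab_all[OF sTN] .
    have feas: "fst (tab T (s T) Gamma) \<le> 0" using PT s(1) unfolding tabP_def by blast
    have "val T s \<le> fst (snd (tab T (s T) Gamma))" using PT s(1) feas unfolding tabP_def by blast
    also have "\<dots> \<le> b" using mx sTN Cm feas by blast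
    finally show "obj D \<le> obj D'" using s(2) oD' by linarith
  qed
  then show ?thesis using wsN ws by blast
qed

end


lemma run_Suc: "run P s (Suc n) = run P (step P s) n"
  unfolding run_def funpow_Suc_right by simp

lemma run_0: "run P s 0 = s" by (simp add: run_def)

lemma run_add: "run P s (m + n) = run P (run P s m) n"
  unfolding run_def by (metis funpow_add add.commute comp_apply)

definition wp :: "prog \<Rightarrow> nat \<Rightarrow> (int \<Rightarrow> real) \<Rightarrow> nat \<Rightarrow> (nat \<Rightarrow> (int \<Rightarrow> real) \<Rightarrow> bool) \<Rightarrow> bool" where
  "wp P pc M b Q \<longleftrightarrow> (\<exists>n pc' M'. run P (Running pc M) n = Running pc' M' \<and> n \<le> b \<and> Q pc' M')"

lemma wp_done: "Q pc M \<Longrightarrow> wp P pc M b Q"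
  unfolding wp_def by (rule exI[of _ 0]) (simp add: run_0)

lemma wp_mono: "wp P pc M b Q \<Longrightarrow> b \<le> b' \<Longrightarrow> (\<And>pc M. Q pc M \<Longrightarrow> Q' pc M) \<Longrightarrow> wp P pc M b' Q'"
  unfolding wp_def by (meson order_trans)

lemma wp_bind: "wp P pc M b1 Q1 \<Longrightarrow> (\<And>pc' M'. Q1 pc' M' \<Longrightarrow> wp P pc' M' b2 Q) \<Longrightarrow> wp P pc M (b1 + b2) Q"
proof -
  assume 1: "wp P pc M b1 Q1" and 2: "\<And>pc' M'. Q1 pc' M' \<Longrightarrow> wp P pc' M' b2 Q"
  obtain n1 pc1 M1 where a: "run P (Running pc M) n1 = Running pc1 M1" "n1 \<le> b1" "Q1 pc1 M1"
    using 1 unfolding wp_def by blast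
  obtain n2 pc2 M2 where b: "run P (Running pc1 M1) n2 = Running pc2 M2" "n2 \<le> b2" "Q pc2 M2"
    using 2[OF a(3)] unfolding wp_def by blast
  have "run P (Running pc M) (n1 + n2) = Running pc2 M2" using a(1) b(1) by (simp add: run_add)
  then show ?thesis unfolding wp_def using a(2) b(2,3) by (rule_tac exI[of _ "n1+n2"]) auto
qed

fun wpS :: "prog \<Rightarrow> nat list \<Rightarrow> nat \<Rightarrow> (int \<Rightarrow> real) \<Rightarrow> nat \<Rightarrow> (nat \<Rightarrow> (int \<Rightarrow> real) \<Rightarrow> bool) \<Rightarrow> bool" where
  "wpS P H pc M 0 R = False"
| "wpS P H pc M (Suc b) R = (pc < length P \<and> (case exec_instr (P ! pc) pc M of
      Running pc' M' \<Rightarrow> (if pc' \<in> set H then R pc' M' else wpS P H pc' M' b R)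
    | Halted M' \<Rightarrow> False | Failed \<Rightarrow> False))"

lemma wpS_unfold: "0 < b \<Longrightarrow> wpS P H pc M b R = (pc < length P \<and> (case exec_instr (P ! pc) pc M of
      Running pc' M' \<Rightarrow> (if pc' \<in> set H then R pc' M' else wpS P H pc' M' (b - 1) R)
    | Halted M' \<Rightarrow> False | Failed \<Rightarrow> False))"
proof (cases b)
  case (Suc b')
  then show ?thesis by (simp only: wpS.simps diff_Suc_1)
qed simp

lemma wpS_sound: "wpS P H pc M b R \<Longrightarrow> wp P pc M b (\<lambda>pc' M'. pc' \<in> set H \<and> R pc' M')"
proof (induction b arbitrary: pc M)
  case 0 then show ?case by simp
next
  case (Suc b)
  have pc: "pc < length P" using Suc.prems by simp
  have st: "step P (Running pc M) = exec_instr (P ! pc) pc M" using pc by simp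
  show ?case
  proof (cases "exec_instr (P ! pc) pc M")
    case (Running pc' M')
    show ?thesis
    proof (cases "pc' \<in> set H")
      case True
      then have "R pc' M'" using Suc.prems Running by simp
      then show ?thesis unfolding wp_def using st Running True
        by (rule_tac exI[of _ 1]) (simp add: run_Suc run_0)
    next
      case False
      then have "wpS P H pc' M' b R" using Suc.prems Running by simp
      then have "wp P pc' M' b (\<lambda>pc' M'. pc' \<in> set H \<and> R pc' M')" by (rule Suc.IH)
      then obtain n p2 M2 where "run P (Running pc' M') n = Running p2 M2" "n \<le> b" "p2 \<in> set H \<and> R p2 M2"
        unfolding wp_def by blast
      then show ?thesis unfolding wp_def using st Running
        by (rule_tac exI[of _ "Suc n"]) (simp add: run_Suc)
    qed
  next
    case (Halted M') then show ?thesis using Suc.prems by simp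
  next
    case Failed then show ?thesis using Suc.prems by simp
  qed
qed

lemma wpS_wp: "wpS P H pc M b R \<Longrightarrow> (\<And>pc' M'. pc' \<in> set H \<Longrightarrow> R pc' M' \<Longrightarrow> Q pc' M') \<Longrightarrow> wp P pc M b Q"
  using wpS_sound wp_mono by blast

lemma wp_loop:
  assumes body: "\<And>i M. i < n \<Longrightarrow> I i M \<Longrightarrow> wp P h M b (\<lambda>pc M'. pc = h \<and> I (Suc i) M')"
    and ex: "\<And>M. I n M \<Longrightarrow> wp P h M c Q"
  shows "I 0 M \<Longrightarrow> wp P h M (n * b + c) Q"
proof -
  have "\<And>M. I (n - m) M \<Longrightarrow> m \<le> n \<Longrightarrow> wp P h M (m * b + c) Q" for m
  proof (induction m)
    case 0 then show ?case using ex by simp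
  next
    case (Suc m)
    have "wp P h M b (\<lambda>pc M'. pc = h \<and> I (Suc (n - Suc m)) M')" using body Suc.prems by simp
    moreover have "Suc (n - Suc m) = n - m" using Suc.prems by simp
    ultimately have "wp P h M b (\<lambda>pc M'. pc = h \<and> I (n - m) M')" by simp
    then have "wp P h M (b + (m * b + c)) Q"
      by (rule wp_bind) (use Suc.IH Suc.prems in auto)
    then show ?case by (simp add: algebra_simps)
  qed
  from this[of n] show "I 0 M \<Longrightarrow> wp P h M (n * b + c) Q" by simp
qed


definition prog :: prog where
  "prog = [
    Copy (-1) 0,
    Copy (-2) 1,
    Copy (-3) 2,
    Copy (-4) 3,
    Copy (-5) 4,
    Copy (-6) 5,
    Const (-7) 1,
    Const (-8) 0,
    Const (-9) 3,
    MulI (-10) (-9) (-1),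
    AddI (-11) (-1) (-7),
    MulI (-12) (-9) (-11),
    MulI (-13) (-9) (-1),
    Const (-22) 6,
    AddI (-13) (-13) (-22),
    AddI (-15) (-13) (-10),
    AddI (-14) (-15) (-11),
    MulI (-16) (-10) (-12),
    Const (-17) 1,
    Const (-18) 7,
    Copy (-19) (-13),
    Const (-23) 0,
    JumpLe (-17) (-1) 24,
    JumpLe (-8) (-8) 39,
    LoadInd (-20) (-18),
    AddI (-22) (-18) (-7),
    LoadInd (-21) (-22),
    SubI (-22) (-20) (-21),
    StoreInd (-19) (-22),
    AddI (-19) (-19) (-7),
    StoreInd (-19) (-20),
    AddI (-19) (-19) (-7),
    AddI (-22) (-20) (-21),
    StoreInd (-19) (-22),
    AddI (-19) (-19) (-7),
    AddI (-23) (-23) (-22),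
    AddI (-17) (-17) (-7),
    AddI (-18) (-18) (-9),
    JumpLe (-8) (-8) 22,
    Const (-24) 0,
    Const (-25) 0,
    Const (-26) 0,
    AddI (-27) (-14) (-16),
    SubI (-28) (-14) (-16),
    Const (-33) 3,
    Const (-29) 0,
    JumpLe (-8) (-8) 128,
    JumpLe (-24) (-1) 49,
    JumpLe (-8) (-8) 141,
    AddI (-44) (-13) (-25),
    LoadInd (-34) (-44),
    JumpLe (-30) (-34) 53,
    JumpLe (-8) (-8) 116,
    JumpLe (-34) (-31) 55,
    JumpLe (-8) (-8) 116,
    Const (-35) 1,
    JumpLe (-34) (-32) 58,
    JumpLe (-8) (-8) 61,
    JumpLe (-32) (-34) 60,
    JumpLe (-8) (-8) 61,
    Const (-35) 0,
    SubI (-36) (-26) (-35),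
    JumpLe (-8) (-36) 64,
    JumpLe (-8) (-8) 116,
    MulI (-44) (-9) (-36),
    AddI (-37) (-28) (-44),
    Const (-38) 0,
    Copy (-39) (-13),
    Const (-40) 0,
    Const (-41) 0,
    Const (-42) 0,
    Const (-43) 0,
    JumpLe (-10) (-38) 90,
    LoadInd (-49) (-39),
    JumpLe (-49) (-34) 76,
    JumpLe (-8) (-8) 86,
    LoadInd (-50) (-37),
    JumpLe (-50) (-8) 79,
    JumpLe (-8) (-8) 86,
    AddI (-44) (-37) (-7),
    LoadInd (-51) (-44),
    JumpLe (-40) (-8) 83,
    JumpLe (-51) (-41) 86,
    Copy (-40) (-7),
    Copy (-41) (-51),
    Copy (-42) (-38),
    AddI (-38) (-38) (-7),
    AddI (-39) (-39) (-7),
    AddI (-37) (-37) (-12),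
    JumpLe (-8) (-8) 72,
    JumpLe (-43) (-8) 92,
    JumpLe (-8) (-8) 151,
    JumpLe (-40) (-8) 116,
    SubI (-44) (-29) (-34),
    MulI (-46) (-3) (-44),
    SubI (-44) (-34) (-29),
    MulI (-47) (-4) (-44),
    JumpLe (-1) (-24) 99,
    JumpLe (-8) (-8) 106,
    MulI (-44) (-2) (-29),
    AddI (-46) (-46) (-44),
    AddI (-47) (-47) (-44),
    MulI (-44) (-5) (-34),
    SubI (-46) (-46) (-44),
    MulI (-44) (-5) (-29),
    SubI (-47) (-47) (-44),
    Copy (-48) (-46),
    JumpLe (-47) (-46) 109,
    Copy (-48) (-47),
    AddI (-44) (-48) (-41),
    StoreInd (-27) (-8),
    AddI (-45) (-27) (-7),
    StoreInd (-45) (-44),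
    AddI (-45) (-45) (-7),
    StoreInd (-45) (-42),
    JumpLe (-8) (-8) 121,
    StoreInd (-27) (-7),
    AddI (-45) (-27) (-7),
    StoreInd (-45) (-8),
    AddI (-45) (-45) (-7),
    StoreInd (-45) (-8),
    AddI (-27) (-27) (-9),
    AddI (-26) (-26) (-7),
    JumpLe (-26) (-1) 47,
    Const (-26) 0,
    AddI (-25) (-25) (-7),
    JumpLe (-10) (-25) 128,
    JumpLe (-8) (-8) 47,
    Const (-25) 0,
    AddI (-24) (-24) (-7),
    AddI (-28) (-28) (-16),
    AddI (-33) (-33) (-9),
    LoadInd (-44) (-33),
    AddI (-29) (-29) (-44),
    AddI (-44) (-33) (-7),
    LoadInd (-32) (-44),
    AddI (-44) (-44) (-7),
    LoadInd (-45) (-44),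
    SubI (-30) (-32) (-45),
    AddI (-31) (-32) (-45),
    JumpLe (-8) (-8) 47,
    MulI (-44) (-9) (-6),
    AddI (-37) (-28) (-44),
    Copy (-34) (-23),
    Const (-38) 0,
    Copy (-39) (-13),
    Const (-40) 0,
    Const (-41) 0,
    Const (-42) 0,
    Const (-43) 1,
    JumpLe (-8) (-8) 72,
    Copy (-24) (-1),
    Copy (-26) (-6),
    Copy (-25) (-42),
    AddI (-52) (-15) (-1),
    JumpLe (-7) (-24) 157,
    JumpLe (-8) (-8) 183,
    MulI (-53) (-24) (-10),
    AddI (-53) (-53) (-25),
    MulI (-53) (-53) (-11),
    AddI (-53) (-53) (-26),
    MulI (-53) (-53) (-9),
    AddI (-53) (-53) (-14),
    AddI (-44) (-13) (-25),
    LoadInd (-34) (-44),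
    MulI (-44) (-9) (-24),
    Const (-45) 4,
    AddI (-44) (-44) (-45),
    LoadInd (-32) (-44),
    Const (-35) 1,
    JumpLe (-34) (-32) 172,
    JumpLe (-8) (-8) 175,
    JumpLe (-32) (-34) 174,
    JumpLe (-8) (-8) 175,
    Const (-35) 0,
    AddI (-44) (-53) (-7),
    AddI (-44) (-44) (-7),
    LoadInd (-25) (-44),
    SubI (-26) (-26) (-35),
    StoreInd (-52) (-34),
    SubI (-24) (-24) (-7),
    SubI (-52) (-52) (-7),
    JumpLe (-8) (-8) 155,
    Copy 1 (-1),
    AddI 2 (-15) (-7),
    Const 4 1,
    Const 0 1,
    Const 5 (-1),
    JumpLe 0 1 190,
    JumpLe 4 4 196,
    LoadInd 3 2,
    StoreInd 5 3,
    AddI 0 0 4,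
    AddI 2 2 4,
    SubI 5 5 4,
    JumpLe 4 4 188,
    Halt]"

lemma prog_len: "length prog = 197" by (simp add: prog_def)

lemma prog_at:
  "prog ! 0 = Copy (-1) 0"
  "prog ! 1 = Copy (-2) 1"
  "prog ! 2 = Copy (-3) 2"
  "prog ! 3 = Copy (-4) 3"
  "prog ! 4 = Copy (-5) 4"
  "prog ! 5 = Copy (-6) 5"
  "prog ! 6 = Const (-7) 1"
  "prog ! 7 = Const (-8) 0"
  "prog ! 8 = Const (-9) 3"
  "prog ! 9 = MulI (-10) (-9) (-1)"
  "prog ! 10 = AddI (-11) (-1) (-7)"
  "prog ! 11 = MulI (-12) (-9) (-11)"
  "prog ! 12 = MulI (-13) (-9) (-1)"
  "prog ! 13 = Const (-22) 6"
  "prog ! 14 = AddI (-13) (-13) (-22)"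
  "prog ! 15 = AddI (-15) (-13) (-10)"
  "prog ! 16 = AddI (-14) (-15) (-11)"
  "prog ! 17 = MulI (-16) (-10) (-12)"
  "prog ! 18 = Const (-17) 1"
  "prog ! 19 = Const (-18) 7"
  "prog ! 20 = Copy (-19) (-13)"
  "prog ! 21 = Const (-23) 0"
  "prog ! 22 = JumpLe (-17) (-1) 24"
  "prog ! 23 = JumpLe (-8) (-8) 39"
  "prog ! 24 = LoadInd (-20) (-18)"
  "prog ! 25 = AddI (-22) (-18) (-7)"
  "prog ! 26 = LoadInd (-21) (-22)"
  "prog ! 27 = SubI (-22) (-20) (-21)"
  "prog ! 28 = StoreInd (-19) (-22)"
  "prog ! 29 = AddI (-19) (-19) (-7)"
  "prog ! 30 = StoreInd (-19) (-20)"
  "prog ! 31 = AddI (-19) (-19) (-7)"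
  "prog ! 32 = AddI (-22) (-20) (-21)"
  "prog ! 33 = StoreInd (-19) (-22)"
  "prog ! 34 = AddI (-19) (-19) (-7)"
  "prog ! 35 = AddI (-23) (-23) (-22)"
  "prog ! 36 = AddI (-17) (-17) (-7)"
  "prog ! 37 = AddI (-18) (-18) (-9)"
  "prog ! 38 = JumpLe (-8) (-8) 22"
  "prog ! 39 = Const (-24) 0"
  "prog ! 40 = Const (-25) 0"
  "prog ! 41 = Const (-26) 0"
  "prog ! 42 = AddI (-27) (-14) (-16)"
  "prog ! 43 = SubI (-28) (-14) (-16)"
  "prog ! 44 = Const (-33) 3"
  "prog ! 45 = Const (-29) 0"
  "prog ! 46 = JumpLe (-8) (-8) 128"
  "prog ! 47 = JumpLe (-24) (-1) 49"
  "prog ! 48 = JumpLe (-8) (-8) 141"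
  "prog ! 49 = AddI (-44) (-13) (-25)"
  "prog ! 50 = LoadInd (-34) (-44)"
  "prog ! 51 = JumpLe (-30) (-34) 53"
  "prog ! 52 = JumpLe (-8) (-8) 116"
  "prog ! 53 = JumpLe (-34) (-31) 55"
  "prog ! 54 = JumpLe (-8) (-8) 116"
  "prog ! 55 = Const (-35) 1"
  "prog ! 56 = JumpLe (-34) (-32) 58"
  "prog ! 57 = JumpLe (-8) (-8) 61"
  "prog ! 58 = JumpLe (-32) (-34) 60"
  "prog ! 59 = JumpLe (-8) (-8) 61"
  "prog ! 60 = Const (-35) 0"
  "prog ! 61 = SubI (-36) (-26) (-35)"
  "prog ! 62 = JumpLe (-8) (-36) 64"
  "prog ! 63 = JumpLe (-8) (-8) 116"
  "prog ! 64 = MulI (-44) (-9) (-36)"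
  "prog ! 65 = AddI (-37) (-28) (-44)"
  "prog ! 66 = Const (-38) 0"
  "prog ! 67 = Copy (-39) (-13)"
  "prog ! 68 = Const (-40) 0"
  "prog ! 69 = Const (-41) 0"
  "prog ! 70 = Const (-42) 0"
  "prog ! 71 = Const (-43) 0"
  "prog ! 72 = JumpLe (-10) (-38) 90"
  "prog ! 73 = LoadInd (-49) (-39)"
  "prog ! 74 = JumpLe (-49) (-34) 76"
  "prog ! 75 = JumpLe (-8) (-8) 86"
  "prog ! 76 = LoadInd (-50) (-37)"
  "prog ! 77 = JumpLe (-50) (-8) 79"
  "prog ! 78 = JumpLe (-8) (-8) 86"
  "prog ! 79 = AddI (-44) (-37) (-7)"
  "prog ! 80 = LoadInd (-51) (-44)"
  "prog ! 81 = JumpLe (-40) (-8) 83"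
  "prog ! 82 = JumpLe (-51) (-41) 86"
  "prog ! 83 = Copy (-40) (-7)"
  "prog ! 84 = Copy (-41) (-51)"
  "prog ! 85 = Copy (-42) (-38)"
  "prog ! 86 = AddI (-38) (-38) (-7)"
  "prog ! 87 = AddI (-39) (-39) (-7)"
  "prog ! 88 = AddI (-37) (-37) (-12)"
  "prog ! 89 = JumpLe (-8) (-8) 72"
  "prog ! 90 = JumpLe (-43) (-8) 92"
  "prog ! 91 = JumpLe (-8) (-8) 151"
  "prog ! 92 = JumpLe (-40) (-8) 116"
  "prog ! 93 = SubI (-44) (-29) (-34)"
  "prog ! 94 = MulI (-46) (-3) (-44)"
  "prog ! 95 = SubI (-44) (-34) (-29)"
  "prog ! 96 = MulI (-47) (-4) (-44)"
  "prog ! 97 = JumpLe (-1) (-24) 99"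
  "prog ! 98 = JumpLe (-8) (-8) 106"
  "prog ! 99 = MulI (-44) (-2) (-29)"
  "prog ! 100 = AddI (-46) (-46) (-44)"
  "prog ! 101 = AddI (-47) (-47) (-44)"
  "prog ! 102 = MulI (-44) (-5) (-34)"
  "prog ! 103 = SubI (-46) (-46) (-44)"
  "prog ! 104 = MulI (-44) (-5) (-29)"
  "prog ! 105 = SubI (-47) (-47) (-44)"
  "prog ! 106 = Copy (-48) (-46)"
  "prog ! 107 = JumpLe (-47) (-46) 109"
  "prog ! 108 = Copy (-48) (-47)"
  "prog ! 109 = AddI (-44) (-48) (-41)"
  "prog ! 110 = StoreInd (-27) (-8)"
  "prog ! 111 = AddI (-45) (-27) (-7)"
  "prog ! 112 = StoreInd (-45) (-44)"
  "prog ! 113 = AddI (-45) (-45) (-7)"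
  "prog ! 114 = StoreInd (-45) (-42)"
  "prog ! 115 = JumpLe (-8) (-8) 121"
  "prog ! 116 = StoreInd (-27) (-7)"
  "prog ! 117 = AddI (-45) (-27) (-7)"
  "prog ! 118 = StoreInd (-45) (-8)"
  "prog ! 119 = AddI (-45) (-45) (-7)"
  "prog ! 120 = StoreInd (-45) (-8)"
  "prog ! 121 = AddI (-27) (-27) (-9)"
  "prog ! 122 = AddI (-26) (-26) (-7)"
  "prog ! 123 = JumpLe (-26) (-1) 47"
  "prog ! 124 = Const (-26) 0"
  "prog ! 125 = AddI (-25) (-25) (-7)"
  "prog ! 126 = JumpLe (-10) (-25) 128"
  "prog ! 127 = JumpLe (-8) (-8) 47"
  "prog ! 128 = Const (-25) 0"
  "prog ! 129 = AddI (-24) (-24) (-7)"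
  "prog ! 130 = AddI (-28) (-28) (-16)"
  "prog ! 131 = AddI (-33) (-33) (-9)"
  "prog ! 132 = LoadInd (-44) (-33)"
  "prog ! 133 = AddI (-29) (-29) (-44)"
  "prog ! 134 = AddI (-44) (-33) (-7)"
  "prog ! 135 = LoadInd (-32) (-44)"
  "prog ! 136 = AddI (-44) (-44) (-7)"
  "prog ! 137 = LoadInd (-45) (-44)"
  "prog ! 138 = SubI (-30) (-32) (-45)"
  "prog ! 139 = AddI (-31) (-32) (-45)"
  "prog ! 140 = JumpLe (-8) (-8) 47"
  "prog ! 141 = MulI (-44) (-9) (-6)"
  "prog ! 142 = AddI (-37) (-28) (-44)"
  "prog ! 143 = Copy (-34) (-23)"
  "prog ! 144 = Const (-38) 0"
  "prog ! 145 = Copy (-39) (-13)"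
  "prog ! 146 = Const (-40) 0"
  "prog ! 147 = Const (-41) 0"
  "prog ! 148 = Const (-42) 0"
  "prog ! 149 = Const (-43) 1"
  "prog ! 150 = JumpLe (-8) (-8) 72"
  "prog ! 151 = Copy (-24) (-1)"
  "prog ! 152 = Copy (-26) (-6)"
  "prog ! 153 = Copy (-25) (-42)"
  "prog ! 154 = AddI (-52) (-15) (-1)"
  "prog ! 155 = JumpLe (-7) (-24) 157"
  "prog ! 156 = JumpLe (-8) (-8) 183"
  "prog ! 157 = MulI (-53) (-24) (-10)"
  "prog ! 158 = AddI (-53) (-53) (-25)"
  "prog ! 159 = MulI (-53) (-53) (-11)"
  "prog ! 160 = AddI (-53) (-53) (-26)"
  "prog ! 161 = MulI (-53) (-53) (-9)"
  "prog ! 162 = AddI (-53) (-53) (-14)"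
  "prog ! 163 = AddI (-44) (-13) (-25)"
  "prog ! 164 = LoadInd (-34) (-44)"
  "prog ! 165 = MulI (-44) (-9) (-24)"
  "prog ! 166 = Const (-45) 4"
  "prog ! 167 = AddI (-44) (-44) (-45)"
  "prog ! 168 = LoadInd (-32) (-44)"
  "prog ! 169 = Const (-35) 1"
  "prog ! 170 = JumpLe (-34) (-32) 172"
  "prog ! 171 = JumpLe (-8) (-8) 175"
  "prog ! 172 = JumpLe (-32) (-34) 174"
  "prog ! 173 = JumpLe (-8) (-8) 175"
  "prog ! 174 = Const (-35) 0"
  "prog ! 175 = AddI (-44) (-53) (-7)"
  "prog ! 176 = AddI (-44) (-44) (-7)"
  "prog ! 177 = LoadInd (-25) (-44)"
  "prog ! 178 = SubI (-26) (-26) (-35)"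
  "prog ! 179 = StoreInd (-52) (-34)"
  "prog ! 180 = SubI (-24) (-24) (-7)"
  "prog ! 181 = SubI (-52) (-52) (-7)"
  "prog ! 182 = JumpLe (-8) (-8) 155"
  "prog ! 183 = Copy 1 (-1)"
  "prog ! 184 = AddI 2 (-15) (-7)"
  "prog ! 185 = Const 4 1"
  "prog ! 186 = Const 0 1"
  "prog ! 187 = Const 5 (-1)"
  "prog ! 188 = JumpLe 0 1 190"
  "prog ! 189 = JumpLe 4 4 196"
  "prog ! 190 = LoadInd 3 2"
  "prog ! 191 = StoreInd 5 3"
  "prog ! 192 = AddI 0 0 4"
  "prog ! 193 = AddI 2 2 4"
  "prog ! 194 = SubI 5 5 4"
  "prog ! 195 = JumpLe 4 4 188"
  "prog ! 196 = Halt"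
  by (simp_all add: prog_def)


lemma floor_mult_nat [simp]: "\<lfloor>real a * real b\<rfloor> = int a * int b"
  by (metis floor_of_nat of_nat_mult)

lemma nonneg_neq_neg [simp]: "(0::int) \<le> x \<Longrightarrow> (x = - numeral k) = False"
proof -
  assume "0 \<le> x"
  moreover have "- numeral k < (0::int)" by simp
  ultimately have "x \<noteq> - numeral k" by linarith
  then show ?thesis by simp
qed

lemma inner_body:
  fixes M :: "int \<Rightarrow> real"
  assumes regs: "M (-10) = real n" "M (-8) = 0" "M (-7) = 1" "M (-12) = real S" "M (-34) = cv"
    "M (-38) = real i" "M (-39) = real (CB + i)" "M (-37) = real (P0 + S * i)"
    and inr: "inner c bd vl cv i = (M (-40), M (-41), M (-42))"
    and i: "i < n"
    and mem: "M (int CB + int i) = c i" "M (int P0 + int S * int i) = bd i" "M (int P0 + int S * int i + 1) = vl i"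
  shows "wpS prog [72] 72 M 20 (\<lambda>pc M'. M' (-38) = real (Suc i) \<and> M' (-39) = real (CB + Suc i) \<and>
     M' (-37) = real (P0 + S * Suc i) \<and> (M' (-40), M' (-41), M' (-42)) = inner c bd vl cv (Suc i) \<and>
     (\<forall>a. a \<noteq> -38 \<and> a \<noteq> -39 \<and> a \<noteq> -37 \<and> a \<noteq> -40 \<and> a \<noteq> -41 \<and> a \<noteq> -42 \<and> a \<noteq> -44 \<and> a \<noteq> -49 \<and> a \<noteq> -50 \<and> a \<noteq> -51 \<longrightarrow> M' a = M a))"
  using regs i mem
  apply (simp add: wpS_unfold prog_len prog_at inr)
  done

definition nW :: "int \<Rightarrow> bool" where
  "nW a \<longleftrightarrow> a \<noteq> -38 \<and> a \<noteq> -39 \<and> a \<noteq> -37 \<and> a \<noteq> -40 \<and> a \<noteq> -41 \<and> a \<noteq> -42 \<and> a \<noteq> -44 \<and> a \<noteq> -49 \<and> a \<noteq> -50 \<and> a \<noteq> -51"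

lemma inner_loop:
  fixes M0 :: "int \<Rightarrow> real"
  assumes regs: "M0 (-10) = real n" "M0 (-8) = 0" "M0 (-7) = 1" "M0 (-12) = real S" "M0 (-34) = cv"
    "M0 (-38) = 0" "M0 (-39) = real CB" "M0 (-37) = real P0" "M0 (-40) = 0" "M0 (-41) = 0" "M0 (-42) = 0"
    and mem: "\<forall>w<n. M0 (int CB + int w) = c w \<and> M0 (int P0 + int S * int w) = bd w \<and> M0 (int P0 + int S * int w + 1) = vl w"
  shows "wp prog 72 M0 (n * 20 + 1) (\<lambda>pc M'. pc = 90 \<and> (M' (-40), M' (-41), M' (-42)) = inner c bd vl cv n \<and>
           (\<forall>a. nW a \<longrightarrow> M' a = M0 a))"
proof -
  define I where "I = (\<lambda>i M. M (-38) = real i \<and> M (-39) = real (CB + i) \<and> M (-37) = real (P0 + S * i) \<and>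
     inner c bd vl cv i = (M (-40), M (-41), M (-42)) \<and> (\<forall>a. nW a \<longrightarrow> M a = M0 a))"
  have body: "wp prog 72 M 20 (\<lambda>pc M'. pc = 72 \<and> I (Suc i) M')" if i: "i < n" and IM: "I i M" for i M
  proof -
    have f: "\<forall>a. nW a \<longrightarrow> M a = M0 a" using IM by (simp add: I_def)
    have r: "M (-10) = real n" "M (-8) = 0" "M (-7) = 1" "M (-12) = real S" "M (-34) = cv"
      using f regs by (simp_all add: nW_def)
    have m: "M (int CB + int i) = c i" "M (int P0 + int S * int i) = bd i" "M (int P0 + int S * int i + 1) = vl i"
      using f mem i by (simp_all add: nW_def)
    have "wpS prog [72] 72 M 20 (\<lambda>pc M'. M' (-38) = real (Suc i) \<and> M' (-39) = real (CB + Suc i) \<and>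
     M' (-37) = real (P0 + S * Suc i) \<and> (M' (-40), M' (-41), M' (-42)) = inner c bd vl cv (Suc i) \<and>
     (\<forall>a. a \<noteq> -38 \<and> a \<noteq> -39 \<and> a \<noteq> -37 \<and> a \<noteq> -40 \<and> a \<noteq> -41 \<and> a \<noteq> -42 \<and> a \<noteq> -44 \<and> a \<noteq> -49 \<and> a \<noteq> -50 \<and> a \<noteq> -51 \<longrightarrow> M' a = M a))"
      by (rule inner_body) (use r m IM i in \<open>simp_all add: I_def\<close>)
    then show ?thesis
      by (rule wpS_wp) (use f in \<open>auto simp: I_def nW_def algebra_simps\<close>)
  qed
  have ex: "wp prog 72 M 1 (\<lambda>pc M'. pc = 90 \<and> (M' (-40), M' (-41), M' (-42)) = inner c bd vl cv n \<and>
           (\<forall>a. nW a \<longrightarrow> M' a = M0 a))" if IM: "I n M" for M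
  proof -
    have f: "\<forall>a. nW a \<longrightarrow> M a = M0 a" using IM by (simp add: I_def)
    have r: "M (-10) = real n" using f regs by (simp_all add: nW_def)
    have "wpS prog [90] 72 M 1 (\<lambda>pc M'. M' = M)"
      using r IM by (simp add: wpS_unfold prog_len prog_at I_def)
    then show ?thesis by (rule wpS_wp) (use IM in \<open>auto simp: I_def\<close>)
  qed
  have "I 0 M0" using regs by (simp add: I_def)
  then show ?thesis using wp_loop[where I=I, OF body ex] by blast
qed


definition adv_post :: "nat \<Rightarrow> nat \<Rightarrow> nat \<Rightarrow> nat \<Rightarrow> nat \<Rightarrow> nat \<Rightarrow> (int\<Rightarrow>real) \<Rightarrow> (int\<Rightarrow>real) \<Rightarrow> bool" where
  "adv_post T N LS t v k M M' \<longleftrightarrow> M' (-27) = M (-27) + 3 \<and>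
   (if Suc k \<le> T then M' (-26) = real (Suc k) \<and> M' (-25) = real v \<and> M' (-24) = real t \<and>
       M' (-28) = M (-28) \<and> M' (-29) = M (-29) \<and> M' (-30) = M (-30) \<and> M' (-31) = M (-31) \<and> M' (-32) = M (-32) \<and> M' (-33) = M (-33)
    else if Suc v < N then M' (-26) = 0 \<and> M' (-25) = real (Suc v) \<and> M' (-24) = real t \<and>
       M' (-28) = M (-28) \<and> M' (-29) = M (-29) \<and> M' (-30) = M (-30) \<and> M' (-31) = M (-31) \<and> M' (-32) = M (-32) \<and> M' (-33) = M (-33)
    else M' (-26) = 0 \<and> M' (-25) = 0 \<and> M' (-24) = real (Suc t) \<and> M' (-28) = M (-28) + real LS \<and> M' (-33) = M (-33) + 3 \<and>
       M' (-29) = M (-29) + M' (6 + 3 * int t) \<and> M' (-32) = M' (7 + 3 * int t) \<and>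
       M' (-30) = M' (7 + 3 * int t) - M' (8 + 3 * int t) \<and> M' (-31) = M' (7 + 3 * int t) + M' (8 + 3 * int t))"

lemma floor_num_mult [simp]: "\<lfloor>numeral n * real b\<rfloor> = numeral n * int b"
  by (metis floor_of_nat of_nat_mult of_nat_numeral)

definition fA :: "int \<Rightarrow> bool" where
  "fA a \<longleftrightarrow> a \<noteq> -24 \<and> a \<noteq> -25 \<and> a \<noteq> -26 \<and> a \<noteq> -27 \<and> a \<noteq> -28 \<and> a \<noteq> -29 \<and> a \<noteq> -30 \<and> a \<noteq> -31 \<and> a \<noteq> -32 \<and> a \<noteq> -33 \<and> a \<noteq> -44 \<and> a \<noteq> -45"

lemma seg_adv:
  fixes M :: "int \<Rightarrow> real"
  assumes regs: "M (-1) = real T" "M (-7) = 1" "M (-8) = 0" "M (-9) = 3" "M (-10) = real N"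
    "M (-16) = real LS" "M (-24) = real t" "M (-25) = real v" "M (-26) = real k" "M (-33) = real (3 * t + 3)"
  shows "wpS prog [47] 121 M 20 (\<lambda>pc M'. adv_post T N LS t v k M M' \<and> (\<forall>a. fA a \<longrightarrow> M' a = M a))"
  using regs
  apply (simp add: wpS_unfold prog_len prog_at adv_post_def fA_def)
  done

lemma neg_eq_nonneg: "a < 0 \<Longrightarrow> (0::int) \<le> x \<Longrightarrow> (a = x) = False"
  by auto

lemma seg_bad:
  fixes M :: "int \<Rightarrow> real"
  assumes regs: "M (-7) = 1" "M (-8) = 0" "M (-27) = real cl"
  shows "wpS prog [121] 116 M 10 (\<lambda>pc M'. (\<forall>a. 0 \<le> a \<longrightarrow> M' a = (M(int cl := 1, int cl + 1 := 0, int cl + 2 := 0)) a) \<and>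
     (\<forall>a. a < 0 \<and> a \<noteq> -45 \<longrightarrow> M' a = M a))"
  using regs
  apply (simp add: wpS_unfold prog_len prog_at neg_eq_nonneg)
  done

definition nP1 :: "int \<Rightarrow> bool" where
  "nP1 a \<longleftrightarrow> a \<noteq> -34 \<and> a \<noteq> -35 \<and> a \<noteq> -36 \<and> a \<noteq> -37 \<and> a \<noteq> -38 \<and> a \<noteq> -39 \<and> a \<noteq> -40 \<and> a \<noteq> -41 \<and> a \<noteq> -42 \<and> a \<noteq> -43 \<and> a \<noteq> -44"

lemma seg_p1:
  fixes M :: "int \<Rightarrow> real"
  assumes regs: "M (-1) = real T" "M (-7) = 1" "M (-8) = 0" "M (-9) = 3"
    "M (-13) = real BC" "M (-24) = real t" "M (-25) = real v" "M (-26) = real k" "M (-28) = real rb"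
    "M (-30) = lo0" "M (-31) = hi0" "M (-32) = dh0"
    and tT: "t \<le> T"
    and cvm: "M (int BC + int v) = cv"
  shows "wpS prog [72, 116] 47 M 40 (\<lambda>pc M'.
     (pc = 72 \<longrightarrow> lo0 \<le> cv \<and> cv \<le> hi0 \<and> (if cv = dh0 then 0 else 1) \<le> k \<and>
        M' (-34) = cv \<and> M' (-35) = real (if cv = dh0 then 0 else 1::nat) \<and>
        M' (-36) = real k - real (if cv = dh0 then 0 else 1::nat) \<and>
        M' (-37) = real rb + 3 * (real k - real (if cv = dh0 then 0 else 1::nat)) \<and>
        M' (-38) = 0 \<and> M' (-39) = real BC \<and> M' (-40) = 0 \<and> M' (-41) = 0 \<and> M' (-42) = 0 \<and> M' (-43) = 0 \<and>
        (\<forall>a. nP1 a \<longrightarrow> M' a = M a)) \<and>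
     (pc = 116 \<longrightarrow> \<not> (lo0 \<le> cv \<and> cv \<le> hi0 \<and> (if cv = dh0 then 0 else 1) \<le> k) \<and>
        (\<forall>a. nP1 a \<longrightarrow> M' a = M a)))"
  using regs tT cvm
  apply (simp add: wpS_unfold prog_len prog_at nP1_def)
  done

lemma seg_p3:
  fixes M :: "int \<Rightarrow> real"
  assumes regs: "M (-1) = real T" "M (-2) = cP" "M (-3) = cI" "M (-4) = cB" "M (-5) = bP"
    "M (-7) = 1" "M (-8) = 0" "M (-24) = real t" "M (-27) = real cl" "M (-29) = X" "M (-34) = cv"
    "M (-40) = f" "M (-41) = b" "M (-42) = ar" "M (-43) = 0"
    and tT: "t \<le> T"
  shows "wpS prog [116, 121] 90 M 40 (\<lambda>pc M'.
     (pc = 116 \<longrightarrow> f \<le> 0 \<and> M' = M) \<and>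
     (pc = 121 \<longrightarrow> \<not> f \<le> 0 \<and>
        (\<forall>a. 0 \<le> a \<longrightarrow> M' a = (M(int cl := 0, int cl + 1 := max (fI T cP cI bP t X cv) (fB T cP cB bP t X cv) + b, int cl + 2 := ar)) a) \<and>
        (\<forall>a. a < 0 \<and> a \<noteq> -44 \<and> a \<noteq> -45 \<and> a \<noteq> -46 \<and> a \<noteq> -47 \<and> a \<noteq> -48 \<longrightarrow> M' a = M a)))"
  using regs tT
  apply (simp add: wpS_unfold prog_len prog_at neg_eq_nonneg fI_def fB_def)
  done


lemma prog_at1: "prog ! Suc 0 = Copy (-2) 1" by (simp add: prog_def)

lemma floor_neg_nat [simp]: "\<lfloor>- real t\<rfloor> = - int t"
  by (metis floor_of_int of_int_minus of_int_of_nat_eq)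

lemma wpS_Suc0: "wpS P H (Suc 0) M b R = wpS P H 1 M b R" by simp

lemma seg_setup:
  fixes M :: "int \<Rightarrow> real"
  assumes "M 0 = real T" "M 1 = cP" "M 2 = cI" "M 3 = cB" "M 4 = bP" "M 5 = real G"
  shows "wpS prog [22] 2 (M(-1 := M 0, -2 := M 1)) 30 (\<lambda>pc M'. M' (-1) = real T \<and> M' (-2) = cP \<and> M' (-3) = cI \<and> M' (-4) = cB \<and>
    M' (-5) = bP \<and> M' (-6) = real G \<and> M' (-7) = 1 \<and> M' (-8) = 0 \<and> M' (-9) = 3 \<and>
    M' (-10) = real (3 * T) \<and> M' (-11) = real (T + 1) \<and> M' (-12) = real (3 * (T + 1)) \<and>
    M' (-13) = real (3 * T + 6) \<and> M' (-15) = real (3 * T + 6 + 3 * T) \<and>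
    M' (-14) = real (3 * T + 6 + 3 * T + (T + 1)) \<and> M' (-16) = real (3 * T * (3 * (T + 1))) \<and>
    M' (-17) = 1 \<and> M' (-18) = 7 \<and> M' (-19) = real (3 * T + 6) \<and> M' (-23) = 0 \<and>
    (\<forall>a. 0 \<le> a \<longrightarrow> M' a = M a))"
  using assms
  by (simp add: wpS_unfold prog_len prog_at)

lemma seg_L1body:
  fixes M :: "int \<Rightarrow> real"
  assumes "M (-1) = real T" "M (-7) = 1" "M (-8) = 0" "M (-9) = 3" "M (-17) = real (Suc s)"
    "M (-18) = real (3 * s + 7)" "M (-19) = real (BC + 3 * s)" "M (-23) = cm" "s < T"
    "M \<lfloor>real (3 * s + 7)\<rfloor> = dh" "M \<lfloor>real (3 * s + 7) + 1\<rfloor> = dl"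
  shows "wpS prog [22] 22 M 20 (\<lambda>pc M'. M' (-17) = real (Suc (Suc s)) \<and> M' (-18) = real (3 * Suc s + 7) \<and>
     M' (-19) = real (BC + 3 * Suc s) \<and> M' (-23) = cm + (dh + dl) \<and>
     (\<forall>a. 0 \<le> a \<longrightarrow> M' a = (M(int (BC + 3 * s) := dh - dl, int (BC + 3 * s) + 1 := dh, int (BC + 3 * s) + 2 := dh + dl)) a) \<and>
     (\<forall>a. a < 0 \<and> (a < -23 \<or> -16 \<le> a) \<longrightarrow> M' a = M a))"
  using assms
  by (simp add: wpS_unfold prog_len prog_at neg_eq_nonneg)

lemma seg_L1exit:
  fixes M :: "int \<Rightarrow> real"
  assumes "M (-1) = real T" "M (-8) = 0" "M (-17) = real (Suc T)"
  shows "wpS prog [39] 22 M 5 (\<lambda>pc M'. M' = M)"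
  using assms by (simp add: wpS_unfold prog_len prog_at)

lemma seg_init:
  fixes M :: "int \<Rightarrow> real"
  assumes "M (-7) = 1" "M (-8) = 0" "M (-9) = 3" "M (-14) = real BT" "M (-16) = real LS"
    "M 6 = x1" "M 7 = d1" "M 8 = e1"
  shows "wpS prog [47] 39 M 30 (\<lambda>pc M'. M' (-24) = 1 \<and> M' (-25) = 0 \<and> M' (-26) = 0 \<and>
     M' (-27) = real (BT + LS) \<and> M' (-28) = real BT \<and> M' (-33) = 6 \<and> M' (-29) = x1 \<and>
     M' (-32) = d1 \<and> M' (-30) = d1 - e1 \<and> M' (-31) = d1 + e1 \<and>
     (\<forall>a. fA a \<longrightarrow> M' a = M a))"
  using assms by (simp add: wpS_unfold prog_len prog_at fA_def)

lemma seg_head_exit: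
  fixes M :: "int \<Rightarrow> real"
  assumes "M (-24) = real t" "M (-1) = real T" "T < t" "M (-8) = 0"
  shows "wpS prog [141] 47 M 5 (\<lambda>pc M'. M' = M)"
  using assms by (simp add: wpS_unfold prog_len prog_at)

lemma seg_dpx:
  fixes M :: "int \<Rightarrow> real"
  assumes "M (-8) = 0" "M (-9) = 3" "M (-6) = real G" "M (-28) = real rb" "M (-23) = cm" "M (-13) = real BC"
  shows "wpS prog [72] 141 M 20 (\<lambda>pc M'. M' (-37) = real (rb + 3 * G) \<and> M' (-34) = cm \<and> M' (-38) = 0 \<and>
     M' (-39) = real BC \<and> M' (-40) = 0 \<and> M' (-41) = 0 \<and> M' (-42) = 0 \<and> M' (-43) = 1 \<and>
     (\<forall>a. nP1 a \<longrightarrow> M' a = M a))"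
  using assms by (simp add: wpS_unfold prog_len prog_at nP1_def)

lemma seg_fin:
  fixes M :: "int \<Rightarrow> real"
  assumes "M (-43) = 1" "M (-8) = 0"
  shows "wpS prog [151] 90 M 5 (\<lambda>pc M'. M' = M)"
  using assms by (simp add: wpS_unfold prog_len prog_at)

lemma seg_bt0:
  fixes M :: "int \<Rightarrow> real"
  shows "wpS prog [155] 151 M 10 (\<lambda>pc M'. M' (-24) = M (-1) \<and> M' (-26) = M (-6) \<and> M' (-25) = M (-42) \<and>
     M' (-52) = M (-15) + M (-1) \<and> (\<forall>a. a \<noteq> -24 \<and> a \<noteq> -25 \<and> a \<noteq> -26 \<and> a \<noteq> -52 \<longrightarrow> M' a = M a))"
  by (simp add: wpS_unfold prog_len prog_at)

lemma seg_btbody: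
  fixes M :: "int \<Rightarrow> real"
  assumes "M (-7) = 1" "M (-8) = 0" "M (-9) = 3" "M (-10) = real N" "M (-11) = real T1" "M (-13) = real BC"
    "M (-14) = real BT" "M (-24) = real t" "1 \<le> t" "M (-25) = real v" "M (-26) = real k" "M (-52) = real dp"
    "M \<lfloor>real BC + real v\<rfloor> = cv" "M \<lfloor>3 * real t + 4\<rfloor> = dh"
    "M \<lfloor>((real t * real N + real v) * real T1 + real k) * 3 + real BT + 1 + 1\<rfloor> = ar"
  shows "wpS prog [155] 155 M 40 (\<lambda>pc M'. M' (-24) = real (t - 1) \<and> M' (-25) = ar \<and>
     M' (-26) = real k - real (if cv = dh then 0 else 1::nat) \<and> M' (-52) = real dp - 1 \<and>
     (\<forall>a. 0 \<le> a \<longrightarrow> M' a = (M(int dp := cv)) a) \<and>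
     (\<forall>a. a < 0 \<and> a \<noteq> -24 \<and> a \<noteq> -25 \<and> a \<noteq> -26 \<and> a \<noteq> -32 \<and> a \<noteq> -34 \<and> a \<noteq> -35 \<and> a \<noteq> -44 \<and> a \<noteq> -45 \<and> a \<noteq> -52 \<and> a \<noteq> -53 \<longrightarrow> M' a = M a))"
  using assms by (simp add: wpS_unfold prog_len prog_at neg_eq_nonneg of_nat_diff)

lemma seg_btexit:
  fixes M :: "int \<Rightarrow> real"
  assumes "M (-7) = 1" "M (-8) = 0" "M (-24) = 0"
  shows "wpS prog [183] 155 M 5 (\<lambda>pc M'. M' = M)"
  using assms by (simp add: wpS_unfold prog_len prog_at)

lemma seg_out0:
  fixes M :: "int \<Rightarrow> real"
  assumes "M (-7) = 1"
  shows "wpS prog [188] 183 M 10 (\<lambda>pc M'. M' 0 = 1 \<and> M' 1 = M (-1) \<and> M' 2 = M (-15) + 1 \<and> M' 4 = 1 \<and> M' 5 = -1 \<and>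
     (\<forall>a. a \<noteq> 0 \<and> a \<noteq> 1 \<and> a \<noteq> 2 \<and> a \<noteq> 4 \<and> a \<noteq> 5 \<longrightarrow> M' a = M a))"
  using assms by (simp add: wpS_unfold prog_len prog_at)

lemma seg_outbody:
  fixes M :: "int \<Rightarrow> real"
  assumes "M 0 = real t" "M 1 = real T" "t \<le> T" "1 \<le> t" "M 2 = real dd" "M 4 = 1" "M 5 = - real t" "M (int dd) = vv"
  shows "wpS prog [188] 188 M 10 (\<lambda>pc M'. M' 0 = real (Suc t) \<and> M' 2 = real (Suc dd) \<and> M' 5 = - real (Suc t) \<and>
     M' 1 = M 1 \<and> M' 4 = M 4 \<and> M' (- int t) = vv \<and>
     (\<forall>a. a \<noteq> 0 \<and> a \<noteq> 2 \<and> a \<noteq> 3 \<and> a \<noteq> 5 \<and> a \<noteq> - int t \<longrightarrow> M' a = M a))"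
  using assms by (simp add: wpS_unfold prog_len prog_at)

lemma seg_outexit:
  fixes M :: "int \<Rightarrow> real"
  assumes "M 0 = real t" "M 1 = real T" "T < t" "M 4 = 1"
  shows "wpS prog [196] 188 M 5 (\<lambda>pc M'. M' = M)"
  using assms by (simp add: wpS_unfold prog_len prog_at)


context inst begin

definition BC :: nat where "BC = 3 * T + 6"
definition BD :: nat where "BD = BC + N"
definition TT1 :: nat where "TT1 = T + 1"
definition BT :: nat where "BT = BD + TT1"
definition SS :: nat where "SS = 3 * TT1"
definition LS :: nat where "LS = N * SS"
definition M0 :: "int \<Rightarrow> real" where "M0 = input_mem T cP cI cB bP Gamma x Dhat Delta"
definition Cmax :: real where "Cmax = (\<Sum>i=1..T. Dhat i + Delta i)"

definition cregs :: "(int \<Rightarrow> real) \<Rightarrow> bool" where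
  "cregs M \<longleftrightarrow> M (-1) = real T \<and> M (-2) = cP \<and> M (-3) = cI \<and> M (-4) = cB \<and> M (-5) = bP \<and>
     M (-6) = real Gamma \<and> M (-7) = 1 \<and> M (-8) = 0 \<and> M (-9) = 3 \<and> M (-10) = real N \<and>
     M (-11) = real TT1 \<and> M (-12) = real SS \<and> M (-13) = real BC \<and> M (-14) = real BT \<and>
     M (-15) = real BD \<and> M (-16) = real LS"

lemma cregs_frame: "cregs M \<Longrightarrow> (\<And>a. -16 \<le> a \<Longrightarrow> a \<le> -1 \<Longrightarrow> M' a = M a) \<Longrightarrow> cregs M'"
  unfolding cregs_def by simp

lemma M0_reads:
  assumes "1 \<le> t" "t \<le> T"
  shows "M0 (int (3*t+3)) = x t" "M0 (int (3*t+4)) = Dhat t" "M0 (int (3*t+5)) = Delta t"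
proof -
  have a: "int (3*t+3) div 3 - 1 = int t" "int (3*t+4) div 3 - 1 = int t" "int (3*t+5) div 3 - 1 = int t"
    "int (3*t+3) mod 3 = 0" "int (3*t+4) mod 3 = 1" "int (3*t+5) mod 3 = 2" by presburger+
  show "M0 (int (3*t+3)) = x t" "M0 (int (3*t+4)) = Dhat t" "M0 (int (3*t+5)) = Delta t"
    unfolding M0_def input_mem_def Let_def using assms a by auto
qed

lemma M0_high: "int (3*T+5) < a \<Longrightarrow> M0 a = 0"
  unfolding M0_def input_mem_def by auto

lemma M0_low: "M0 0 = real T" "M0 1 = cP" "M0 2 = cI" "M0 3 = cB" "M0 4 = bP" "M0 5 = real Gamma"
  unfolding M0_def input_mem_def by auto

definition hA :: "nat \<Rightarrow> int \<Rightarrow> real" where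
  "hA s a = (if int BC \<le> a \<and> a < int BC + 3 * int s then cand (nat (a - int BC)) else M0 a)"

definition IA :: "nat \<Rightarrow> (int \<Rightarrow> real) \<Rightarrow> bool" where
  "IA s M \<longleftrightarrow> cregs M \<and> M (-17) = real (Suc s) \<and> M (-18) = real (3*s+7) \<and> M (-19) = real (BC + 3*s) \<and>
     M (-23) = (\<Sum>i=1..s. Dhat i + Delta i) \<and> (\<forall>a\<ge>0. M a = hA s a)"

lemma cand_trip: "cand (3*s) = lo (Suc s)" "cand (3*s+1) = Dhat (Suc s)" "cand (3*s+2) = hi (Suc s)"
proof -
  have dm: "(3*s+1) div 3 = s" "(3*s+1) mod 3 = 1" "(3*s+2) div 3 = s" "(3*s+2) mod 3 = 2" by presburger+
  show "cand (3*s) = lo (Suc s)" "cand (3*s+1) = Dhat (Suc s)" "cand (3*s+2) = hi (Suc s)"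
    unfolding cand_def lo_def hi_def dm by auto
qed

lemma hA_step:
  assumes "s < T" "0 \<le> a"
  shows "((hA s)(int (BC + 3 * s) := lo (Suc s), int (BC + 3 * s) + 1 := Dhat (Suc s), int (BC + 3 * s) + 2 := hi (Suc s))) a = hA (Suc s) a"
proof -
  have e1: "nat (int (BC + 3 * s) - int BC) = 3*s" "nat (int (BC + 3 * s) + 1 - int BC) = 3*s+1"
    "nat (int (BC + 3 * s) + 2 - int BC) = 3*s+2" by auto
  show ?thesis
    unfolding hA_def using cand_trip e1 by auto
qed

lemma run_two: "run prog (Running 0 M) 2 = Running 2 (M(-1 := M 0, -2 := M 1))"
proof -
  have "prog ! Suc 0 = Copy (-2) 1" by (simp add: prog_def)
  then show ?thesis unfolding numeral_2_eq_2 by (simp add: run_Suc run_0 prog_len prog_at)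
qed

lemma wp_pre: "run P (Running pc M) k = Running pc' M' \<Longrightarrow> wp P pc' M' b Q \<Longrightarrow> wp P pc M (k + b) Q"
  unfolding wp_def by (metis add_le_mono1 le_add1 order_trans run_add add_le_cancel_left) 

lemma phaseA: "wp prog 0 M0 (2 + (30 + (T * 20 + 5))) (\<lambda>pc M. pc = 39 \<and> IA T M)"
proof -
  note S = seg_setup[where M=M0 and T=T and cP=cP and cI=cI and cB=cB and bP=bP and G=Gamma, OF M0_low]
  have A0: "wp prog 2 (M0(-1 := M0 0, -2 := M0 1)) 30 (\<lambda>pc M. pc = 22 \<and> IA 0 M)"
    apply (rule wp_mono[OF wpS_sound[OF S] order_refl])
    apply (simp add: IA_def cregs_def hA_def BC_def BD_def BT_def TT1_def SS_def LS_def N_def algebra_simps)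
    done
  have body: "wp prog 22 M 20 (\<lambda>pc M'. pc = 22 \<and> IA (Suc s) M')" if s: "s < T" and I: "IA s M" for s M
  proof -
    have cr: "cregs M" and r: "M (-17) = real (Suc s)" "M (-18) = real (3*s+7)" "M (-19) = real (BC + 3*s)"
      "M (-23) = (\<Sum>i=1..s. Dhat i + Delta i)" and hp: "\<forall>a\<ge>0. M a = hA s a" using I by (auto simp: IA_def)
    have lt: "int (3*s+7) < int BC" "int (3*s+8) < int BC" using s by (auto simp: BC_def)
    have rd: "M (int (3*s+7)) = Dhat (Suc s)" "M (int (3*s+8)) = Delta (Suc s)"
    proof -
      have e: "3*(Suc s)+4 = 3*s+7" "3*(Suc s)+5 = 3*s+8" by simp_all
      have "M (int (3*s+7)) = M0 (int (3*s+7))" using hp lt by (simp add: hA_def)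
      also have "\<dots> = Dhat (Suc s)" using M0_reads(2)[of "Suc s"] s e by (simp add: add.commute)
      finally show "M (int (3*s+7)) = Dhat (Suc s)" .
      have "M (int (3*s+8)) = M0 (int (3*s+8))" using hp lt by (simp add: hA_def)
      also have "\<dots> = Delta (Suc s)" using M0_reads(3)[of "Suc s"] s e by (simp add: add.commute)
      finally show "M (int (3*s+8)) = Delta (Suc s)" .
    qed
    have rd': "M \<lfloor>real (3 * s + 7)\<rfloor> = Dhat (Suc s)" "M \<lfloor>real (3 * s + 7) + 1\<rfloor> = Delta (Suc s)"
    proof -
      have "\<lfloor>real (3 * s + 7)\<rfloor> = int (3*s+7)" by (rule floor_of_nat)
      then show "M \<lfloor>real (3 * s + 7)\<rfloor> = Dhat (Suc s)" using rd by (simp only:)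
      have "real (3 * s + 7) + 1 = real (3*s+8)" by simp
      then have "\<lfloor>real (3 * s + 7) + 1\<rfloor> = int (3*s+8)" by (simp only: floor_of_nat)
      then show "M \<lfloor>real (3 * s + 7) + 1\<rfloor> = Delta (Suc s)" using rd by (simp only:)
    qed
    have seg: "wpS prog [22] 22 M 20 (\<lambda>pc M'. M' (-17) = real (Suc (Suc s)) \<and> M' (-18) = real (3 * Suc s + 7) \<and>
     M' (-19) = real (BC + 3 * Suc s) \<and> M' (-23) = (\<Sum>i=1..s. Dhat i + Delta i) + (Dhat (Suc s) + Delta (Suc s)) \<and>
     (\<forall>a. 0 \<le> a \<longrightarrow> M' a = (M(int (BC + 3 * s) := Dhat (Suc s) - Delta (Suc s), int (BC + 3 * s) + 1 := Dhat (Suc s), int (BC + 3 * s) + 2 := Dhat (Suc s) + Delta (Suc s))) a) \<and>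
     (\<forall>a. a < 0 \<and> (a < -23 \<or> -16 \<le> a) \<longrightarrow> M' a = M a))"
      apply (rule seg_L1body)
      using cr r s rd' unfolding cregs_def by simp_all
    show ?thesis
    proof (rule wpS_wp[OF seg])
      fix pc' M' assume pc': "pc' \<in> set [22]" and h: "M' (-17) = real (Suc (Suc s)) \<and> M' (-18) = real (3 * Suc s + 7) \<and>
     M' (-19) = real (BC + 3 * Suc s) \<and> M' (-23) = (\<Sum>i=1..s. Dhat i + Delta i) + (Dhat (Suc s) + Delta (Suc s)) \<and>
     (\<forall>a. 0 \<le> a \<longrightarrow> M' a = (M(int (BC + 3 * s) := Dhat (Suc s) - Delta (Suc s), int (BC + 3 * s) + 1 := Dhat (Suc s), int (BC + 3 * s) + 2 := Dhat (Suc s) + Delta (Suc s))) a) \<and>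
     (\<forall>a. a < 0 \<and> (a < -23 \<or> -16 \<le> a) \<longrightarrow> M' a = M a)"
      have hneg: "\<forall>a. a < 0 \<and> (a < -23 \<or> -16 \<le> a) \<longrightarrow> M' a = M a"
        and hpos: "\<forall>a. 0 \<le> a \<longrightarrow> M' a = (M(int (BC + 3 * s) := Dhat (Suc s) - Delta (Suc s), int (BC + 3 * s) + 1 := Dhat (Suc s), int (BC + 3 * s) + 2 := Dhat (Suc s) + Delta (Suc s))) a"
        and hr: "M' (-17) = real (Suc (Suc s))" "M' (-18) = real (3 * Suc s + 7)"
          "M' (-19) = real (BC + 3 * Suc s)" "M' (-23) = (\<Sum>i=1..s. Dhat i + Delta i) + (Dhat (Suc s) + Delta (Suc s))"
        using h by blast+
      have "cregs M'"
      proof (rule cregs_frame[OF cr])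
        fix a :: int assume "-16 \<le> a" "a \<le> -1"
        then show "M' a = M a" using hneg by simp
      qed
      moreover have "\<forall>a\<ge>0. M' a = hA (Suc s) a"
      proof (intro allI impI)
        fix a :: int assume a: "0 \<le> a"
        have "M' a = ((hA s)(int (BC + 3 * s) := lo (Suc s), int (BC + 3 * s) + 1 := Dhat (Suc s), int (BC + 3 * s) + 2 := hi (Suc s))) a"
          using hpos hp a by (simp add: lo_def hi_def)
        also have "\<dots> = hA (Suc s) a" using hA_step s a by blast
        finally show "M' a = hA (Suc s) a" .
      qed
      ultimately show "pc' = 22 \<and> IA (Suc s) M'" using hr pc' unfolding IA_def by simp
    qed
  qed
  have ex: "wp prog 22 M 5 (\<lambda>pc M. pc = 39 \<and> IA T M)" if I: "IA T M" for M
  proof (rule wpS_wp[OF seg_L1exit[where M=M and T=T]])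
    show "M (-1) = real T" "M (-8) = 0" "M (-17) = real (Suc T)" using I by (auto simp: IA_def cregs_def)
  qed (use I in simp)
  have L: "wp prog 22 M (T * 20 + 5) (\<lambda>pc M. pc = 39 \<and> IA T M)" if "IA 0 M" for M
    using wp_loop[where I=IA and n=T, OF body ex] that by blast
  have "wp prog 2 (M0(-1 := M0 0, -2 := M0 1)) (30 + (T * 20 + 5)) (\<lambda>pc M. pc = 39 \<and> IA T M)"
    using wp_bind[OF A0] L by blast
  then show ?thesis using wp_pre[OF run_two] by blast
qed

lemma TT1_pos: "0 < TT1" by (simp add: TT1_def)

definition dt :: "nat \<Rightarrow> nat" where "dt j = j div (N * TT1)"
definition dv :: "nat \<Rightarrow> nat" where "dv j = j mod (N * TT1) div TT1"
definition dk :: "nat \<Rightarrow> nat" where "dk j = j mod TT1"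

lemma dec_comp: "j = (dt j * N + dv j) * TT1 + dk j" "dv j < N" "dk j < TT1"
proof -
  have NP: "0 < N" "0 < TT1" using N_pos TT1_pos by auto
  have a: "j = dt j * (N * TT1) + j mod (N * TT1)" unfolding dt_def by (metis div_mult_mod_eq)
  have b: "j mod (N * TT1) = dv j * TT1 + j mod (N * TT1) mod TT1" unfolding dv_def by (metis div_mult_mod_eq)
  have c: "j mod (N * TT1) mod TT1 = dk j" unfolding dk_def by (simp add: mod_mod_cancel)
  show "j = (dt j * N + dv j) * TT1 + dk j" using a b c by (simp add: algebra_simps)
  have "j mod (N * TT1) < N * TT1" using NP by simp
  then show "dv j < N" unfolding dv_def using NP by (simp add: div_less_iff_less_mult mult.commute)
  show "dk j < TT1" unfolding dk_def using NP by simp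
qed

lemma dec_of: assumes "v < N" "k < TT1"
  shows "dt ((t * N + v) * TT1 + k) = t" "dv ((t * N + v) * TT1 + k) = v" "dk ((t * N + v) * TT1 + k) = k"
proof -
  have NP: "0 < N" "0 < TT1" using N_pos TT1_pos by auto
  have e: "(t * N + v) * TT1 + k = t * (N * TT1) + (v * TT1 + k)" by (simp add: algebra_simps)
  have lt: "v * TT1 + k < N * TT1"
  proof -
    have "v * TT1 + k < v * TT1 + TT1" using assms by simp
    also have "\<dots> = (v + 1) * TT1" by simp
    also have "\<dots> \<le> N * TT1" using assms by (intro mult_right_mono) auto
    finally show ?thesis .
  qed
  show "dt ((t * N + v) * TT1 + k) = t" unfolding dt_def e using lt NP by simp
  have m: "((t * N + v) * TT1 + k) mod (N * TT1) = v * TT1 + k" unfolding e using lt by simp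
  show "dv ((t * N + v) * TT1 + k) = v" unfolding dv_def m using assms NP by simp
  show "dk ((t * N + v) * TT1 + k) = k" unfolding dk_def using assms
    by (metis mod_mult_self3 mod_less add.commute)
qed

lemma dec_next:
  "Suc (dk j) \<le> T \<Longrightarrow> dt (Suc j) = dt j \<and> dv (Suc j) = dv j \<and> dk (Suc j) = Suc (dk j)"
  "\<not> Suc (dk j) \<le> T \<Longrightarrow> Suc (dv j) < N \<Longrightarrow> dt (Suc j) = dt j \<and> dv (Suc j) = Suc (dv j) \<and> dk (Suc j) = 0"
  "\<not> Suc (dk j) \<le> T \<Longrightarrow> \<not> Suc (dv j) < N \<Longrightarrow> dt (Suc j) = Suc (dt j) \<and> dv (Suc j) = 0 \<and> dk (Suc j) = 0"
proof -
  note c = dec_comp[of j]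
  assume a: "Suc (dk j) \<le> T"
  have "Suc j = (dt j * N + dv j) * TT1 + Suc (dk j)" using c(1) by simp
  moreover have "Suc (dk j) < TT1" using a by (simp add: TT1_def)
  ultimately show "dt (Suc j) = dt j \<and> dv (Suc j) = dv j \<and> dk (Suc j) = Suc (dk j)"
    using dec_of[OF c(2)] by metis
next
  note c = dec_comp[of j]
  assume a: "\<not> Suc (dk j) \<le> T" "Suc (dv j) < N"
  have k: "dk j = T" using a c(3) by (simp add: TT1_def)
  have "Suc j = (dt j * N + Suc (dv j)) * TT1 + 0" using c(1) k by (simp add: TT1_def algebra_simps)
  then show "dt (Suc j) = dt j \<and> dv (Suc j) = Suc (dv j) \<and> dk (Suc j) = 0"
    using dec_of[OF a(2), of 0] TT1_pos by metis
next
  note c = dec_comp[of j]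
  assume a: "\<not> Suc (dk j) \<le> T" "\<not> Suc (dv j) < N"
  have k: "dk j = T" using a c(3) by (simp add: TT1_def)
  have v: "Suc (dv j) = N" using a c(2) by simp
  have "Suc j = (dt j * N + dv j) * TT1 + TT1" using c(1) k by (simp add: TT1_def)
  also have "\<dots> = (dt j * N + Suc (dv j)) * TT1" by (simp add: algebra_simps)
  also have "\<dots> = (Suc (dt j) * N + 0) * TT1 + 0" using v by (simp add: algebra_simps)
  finally have "Suc j = (Suc (dt j) * N + 0) * TT1 + 0" .
  then show "dt (Suc j) = Suc (dt j) \<and> dv (Suc j) = 0 \<and> dk (Suc j) = 0"
    using dec_of[OF N_pos, of 0] TT1_pos by metis
qed

lemma tab_bad: "1 \<le> t \<Longrightarrow> \<not> (lo t \<le> cand v \<and> cand v \<le> hi t \<and> dev t v \<le> k) \<Longrightarrow> tab t v k = (1,0,0)"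
  by (cases t) auto

lemma tab_ok: "1 \<le> t \<Longrightarrow> lo t \<le> cand v \<and> cand v \<le> hi t \<and> dev t v \<le> k \<Longrightarrow>
  inner cand (\<lambda>w. fst (tab (t-1) w (k - dev t v))) (\<lambda>w. fst (snd (tab (t-1) w (k - dev t v)))) (cand v) N = (f,b,a) \<Longrightarrow>
  tab t v k = (if f \<le> 0 then (1,0,0) else (0, g t (cand v) + b, a))"
  by (cases t) auto

definition tabcell :: "nat \<Rightarrow> real" where
  "tabcell m = (case tab (dt (m div 3)) (dv (m div 3)) (dk (m div 3)) of (b, vl, ar) \<Rightarrow>
     if m mod 3 = 0 then b else if m mod 3 = 1 then vl else ar)"

definition hB :: "nat \<Rightarrow> int \<Rightarrow> real" where
  "hB j a = (if int BT \<le> a \<and> a < int BT + 3 * int j then tabcell (nat (a - int BT)) else hA T a)"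

definition n0 :: nat where "n0 = N * TT1"
definition nB :: nat where "nB = T * N * TT1"

lemma BT_gt: "int BC + int N < int BT" "int (3*T+5) < int BC" by (auto simp: BT_def BD_def BC_def TT1_def)

lemma hB_read: assumes "j' < j" "tab (dt j') (dv j') (dk j') = (b,vl,ar)"
  shows "hB j (int BT + 3 * int j') = b" "hB j (int BT + 3 * int j' + 1) = vl" "hB j (int BT + 3 * int j' + 2) = ar"
proof -
  have n: "nat (int BT + 3 * int j' - int BT) = 3 * j'" "nat (int BT + 3 * int j' + 1 - int BT) = 3 * j' + 1"
    "nat (int BT + 3 * int j' + 2 - int BT) = 3 * j' + 2" by auto
  have d: "(3*j'+1) div 3 = j'" "(3*j'+1) mod 3 = 1" "(3*j'+2) div 3 = j'" "(3*j'+2) mod 3 = 2" by presburger+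
  show "hB j (int BT + 3 * int j') = b" "hB j (int BT + 3 * int j' + 1) = vl" "hB j (int BT + 3 * int j' + 2) = ar"
    unfolding hB_def using assms n d by (auto simp: tabcell_def)
qed

lemma hB_low: "a < int BT \<Longrightarrow> hB j a = hA T a" by (simp add: hB_def)

lemma hA_C: "v < N \<Longrightarrow> hA T (int BC + int v) = cand v" by (simp add: hA_def N_def)

lemma hA_low: "a < int BC \<Longrightarrow> hA T a = M0 a" by (simp add: hA_def)

lemma hB_upd: assumes "0 \<le> a" "tab (dt j) (dv j) (dk j) = (b,vl,ar)"
  shows "((hB j)(int BT + 3*int j := b, int BT + 3*int j + 1 := vl, int BT + 3*int j + 2 := ar)) a = hB (Suc j) a"
proof -
  have r: "hB (Suc j) (int BT + 3 * int j) = b" "hB (Suc j) (int BT + 3 * int j + 1) = vl" "hB (Suc j) (int BT + 3 * int j + 2) = ar"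
    using hB_read[of j "Suc j", OF _ assms(2)] by auto
  show ?thesis
  proof (cases "a = int BT + 3*int j \<or> a = int BT + 3*int j + 1 \<or> a = int BT + 3*int j + 2")
    case True then show ?thesis using r by auto
  next
    case False
    then have "(int BT \<le> a \<and> a < int BT + 3 * int j) = (int BT \<le> a \<and> a < int BT + 3 * int (Suc j))" by auto
    then show ?thesis using False unfolding hB_def by auto
  qed
qed

lemma hB_init: "0 \<le> a \<Longrightarrow> hB n0 a = hA T a"
proof -
  assume a: "0 \<le> a"
  show ?thesis
  proof (cases "int BT \<le> a \<and> a < int BT + 3 * int n0")
    case True
    define m where "m = nat (a - int BT)"
    have "m < 3 * n0" using True unfolding m_def by linarith
    then have "m div 3 < n0" by linarith
    then have "dt (m div 3) = 0" by (simp add: dt_def n0_def)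
    then have "tabcell m = 0" by (simp add: tabcell_def)
    moreover have "hA T a = 0" using True BT_gt M0_high unfolding hA_def N_def by auto
    ultimately show ?thesis using True by (simp add: hB_def m_def)
  next
    case False then show ?thesis unfolding hB_def by auto
  qed
qed

definition IBj :: "nat \<Rightarrow> (int \<Rightarrow> real) \<Rightarrow> bool" where
  "IBj j M \<longleftrightarrow> cregs M \<and> M (-23) = Cmax \<and> M (-24) = real (dt j) \<and> M (-25) = real (dv j) \<and>
     M (-26) = real (dk j) \<and> M (-27) = real (BT + 3 * j) \<and> M (-28) = real (BT + (dt j - 1) * LS) \<and>
     M (-33) = real (3 * dt j + 3) \<and>
     (dt j \<le> T \<longrightarrow> M (-29) = cumX x (dt j) \<and> M (-30) = lo (dt j) \<and> M (-31) = hi (dt j) \<and> M (-32) = Dhat (dt j)) \<and>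
     (\<forall>a\<ge>0. M a = hB j a)"

lemma j_range: assumes "n0 \<le> j" "j < n0 + nB" shows "1 \<le> dt j" "dt j \<le> T"
proof -
  have NP: "0 < N * TT1" using N_pos TT1_pos by simp
  have "N * TT1 \<le> j" using assms(1) by (simp add: n0_def)
  then have "(N * TT1) div (N * TT1) \<le> j div (N * TT1)" by (rule div_le_mono)
  then show "1 \<le> dt j" unfolding dt_def using NP by simp
  have "j < (T + 1) * (N * TT1)" using assms(2) by (simp add: n0_def nB_def algebra_simps)
  then have "j div (N * TT1) < T + 1" by (rule less_mult_imp_div_less)
  then show "dt j \<le> T" unfolding dt_def by simp
qed

lemma cell_step:
  assumes I: "IBj j M" and jr: "n0 \<le> j" "j < n0 + nB"
  shows "wp prog 47 M (40 + (N * 20 + 1 + (40 + 10))) (\<lambda>pc M'. pc = 121 \<and> (\<forall>a. -33 \<le> a \<and> a \<le> -1 \<longrightarrow> M' a = M a) \<and>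
     (\<forall>a\<ge>0. M' a = ((hB j)(int BT + 3*int j := fst (tab (dt j) (dv j) (dk j)),
        int BT + 3*int j + 1 := fst (snd (tab (dt j) (dv j) (dk j))), int BT + 3*int j + 2 := snd (snd (tab (dt j) (dv j) (dk j))))) a))"
proof -
  define t where "t = dt j"
  define v where "v = dv j"
  define k where "k = dk j"
  have t1: "1 \<le> t" "t \<le> T" using j_range[OF jr] by (auto simp: t_def)
  have vN: "v < N" and kT: "k < TT1" using dec_comp[of j] by (auto simp: v_def k_def)
  have cr: "cregs M" and r: "M (-23) = Cmax" "M (-24) = real t" "M (-25) = real v" "M (-26) = real k"
    "M (-27) = real (BT + 3 * j)" "M (-28) = real (BT + (t - 1) * LS)" "M (-33) = real (3 * t + 3)"
    "M (-29) = cumX x t" "M (-30) = lo t" "M (-31) = hi t" "M (-32) = Dhat t"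
    and hp: "\<forall>a\<ge>0. M a = hB j a"
    using I t1 unfolding IBj_def t_def v_def k_def by auto
  have crr: "M (-1) = real T" "M (-2) = cP" "M (-3) = cI" "M (-4) = cB" "M (-5) = bP" "M (-7) = 1" "M (-8) = 0"
    "M (-9) = 3" "M (-10) = real N" "M (-12) = real SS" "M (-13) = real BC" "M (-16) = real LS"
    using cr unfolding cregs_def by auto
  have cvm: "M (int BC + int v) = cand v"
  proof -
    have "int BC + int v < int BT" using BT_gt vN by linarith
    then show ?thesis using hp hB_low hA_C vN by simp
  qed
  define d where "d = dev t v"
  define kk where "kk = k - d"
  define c where "c = int BT + 3 * int j"
  define trip where "trip = tab t v k"
  have dd: "d = (if cand v = Dhat t then 0 else 1)" by (simp add: d_def dev_def)
  note P1 = seg_p1[where M=M and T=T and BC=BC and t=t and v=v and k=k and rb="BT + (t - 1) * LS"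
      and ?lo0.0="lo t" and ?hi0.0="hi t" and ?dh0.0="Dhat t" and cv="cand v"]
  note W1 = P1[OF crr(1) crr(6) crr(7) crr(8) crr(11) r(2) r(3) r(4) r(6) r(9) r(10) r(11) t1(2) cvm]
  show ?thesis
  proof (rule wp_bind[OF wpS_sound[OF W1]], goal_cases)
    case (1 pc' M1)
    have fr1: "\<forall>a. nP1 a \<longrightarrow> M1 a = M a" using 1 by auto
    have fr1': "M1 a = M a" if ha: "-33 \<le> a \<or> a < -44" for a
    proof -
      have "nP1 a" using ha unfolding nP1_def by auto
      then show ?thesis using fr1 by blast
    qed
    have r1: "M1 (-1) = real T" "M1 (-2) = cP" "M1 (-3) = cI" "M1 (-4) = cB" "M1 (-5) = bP" "M1 (-7) = 1" "M1 (-8) = 0"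
      "M1 (-9) = 3" "M1 (-10) = real N" "M1 (-12) = real SS" "M1 (-13) = real BC" "M1 (-24) = real t"
      "M1 (-27) = real (BT + 3 * j)" "M1 (-29) = cumX x t"
      using fr1' crr r by auto
    have hp1: "\<forall>a\<ge>0. M1 a = hB j a" using fr1' hp by auto
    have hp1': "M1 a = hB j a" if "0 \<le> a" for a using hp1 that by blast
    have pcs: "pc' = 72 \<or> pc' = 116" using 1 by auto
    then show ?case
    proof
      assume p116: "pc' = 116"
      have ncond: "\<not> (lo t \<le> cand v \<and> cand v \<le> hi t \<and> (if cand v = Dhat t then 0 else 1) \<le> k)" using 1 p116 by simp
      then have tb: "trip = (1,0,0)" using tab_bad t1 by (simp add: trip_def dev_def)
      note B = seg_bad[where M=M1 and cl="BT + 3*j", OF r1(6) r1(7) r1(13)]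
      show ?thesis unfolding p116
      proof (rule wp_mono[OF wpS_sound[OF B]], simp, goal_cases)
        case (1 pc M')
        have hpos: "\<forall>a. 0 \<le> a \<longrightarrow> M' a = (M1(int (BT + 3 * j) := 1, int (BT + 3 * j) + 1 := 0, int (BT + 3 * j) + 2 := 0)) a"
          and hneg: "\<forall>a. a < 0 \<and> a \<noteq> -45 \<longrightarrow> M' a = M1 a" and pc: "pc = 121" using 1 by auto
        have A: "\<forall>a. -33 \<le> a \<and> a \<le> -1 \<longrightarrow> M' a = M a"
        proof (intro allI impI)
          fix a :: int assume a: "-33 \<le> a \<and> a \<le> -1"
          then have "M' a = M1 a" using hneg by simp
          then show "M' a = M a" using fr1' a by simp
        qed
        have B: "\<forall>a\<ge>0. M' a = ((hB j)(int BT + 3*int j := fst trip, int BT + 3*int j + 1 := fst (snd trip), int BT + 3*int j + 2 := snd (snd trip))) a"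
        proof (intro allI impI)
          fix a :: int assume a: "0 \<le> a"
          have "M' a = (M1(int (BT + 3 * j) := 1, int (BT + 3 * j) + 1 := 0, int (BT + 3 * j) + 2 := 0)) a" using hpos a by blast
          then show "M' a = ((hB j)(int BT + 3*int j := fst trip, int BT + 3*int j + 1 := fst (snd trip), int BT + 3*int j + 2 := snd (snd trip))) a"
            using hp1'[OF a] tb by simp
        qed
        show ?case using pc A B by (simp add: trip_def t_def v_def k_def)
      qed
    next
      assume p72: "pc' = 72"
      have cond: "lo t \<le> cand v" "cand v \<le> hi t" "d \<le> k" using 1 p72 dd by auto
      have r72: "M1 (-34) = cand v" "M1 (-37) = real (BT + (t - 1) * LS) + 3 * (real k - real d)"
        "M1 (-38) = 0" "M1 (-39) = real BC" "M1 (-40) = 0" "M1 (-41) = 0" "M1 (-42) = 0" "M1 (-43) = 0"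
        using 1 p72 dd by auto
      define P0 where "P0 = BT + (t - 1) * LS + 3 * kk"
      have P0r: "M1 (-37) = real P0" using r72(2) cond(3) by (simp add: P0_def kk_def of_nat_diff)
      define bdf where "bdf = (\<lambda>w. fst (tab (t-1) w kk))"
      define vlf where "vlf = (\<lambda>w. fst (snd (tab (t-1) w kk)))"
      have kkT: "kk < TT1" using kT by (simp add: kk_def)
      have mem: "\<forall>w<N. M1 (int BC + int w) = cand w \<and> M1 (int P0 + int SS * int w) = bdf w \<and> M1 (int P0 + int SS * int w + 1) = vlf w"
      proof (intro allI impI)
        fix w assume w: "w < N"
        define j' where "j' = ((t - 1) * N + w) * TT1 + kk"
        have e: "int P0 + int SS * int w = int BT + 3 * int j'"
        proof -
          have "P0 + SS * w = BT + 3 * j'" unfolding P0_def j'_def LS_def SS_def by (simp add: algebra_simps)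
          then show ?thesis by (metis of_nat_add of_nat_mult of_nat_numeral)
        qed
        have jlt: "j' < j"
        proof -
          have "j' < ((t - 1) * N + w) * TT1 + TT1" using kkT by (simp add: j'_def)
          also have "\<dots> = ((t - 1) * N + w + 1) * TT1" by (simp add: algebra_simps)
          also have "\<dots> \<le> ((t - 1) * N + N) * TT1" using w by (intro mult_right_mono) auto
          also have "\<dots> = (t * N) * TT1" using t1 by (cases t) (auto simp: algebra_simps)
          also have "\<dots> \<le> j" using dec_comp(1)[of j] by (simp add: t_def algebra_simps)
          finally show ?thesis .
        qed
        have dj: "dt j' = t - 1" "dv j' = w" "dk j' = kk" using dec_of[OF w kkT] by (auto simp: j'_def)
        obtain b0 vl0 ar0 where tr: "tab (t-1) w kk = (b0, vl0, ar0)" by (cases "tab (t-1) w kk") auto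
        have rd: "hB j (int BT + 3 * int j') = b0" "hB j (int BT + 3 * int j' + 1) = vl0"
          using hB_read[OF jlt] tr dj by auto
        have C: "M1 (int BC + int w) = cand w"
        proof -
          have "int BC + int w < int BT" using BT_gt w by linarith
          then show ?thesis using hp1' hB_low hA_C w by simp
        qed
        have nn: "0 \<le> int BT + 3 * int j'" "0 \<le> int BT + 3 * int j' + 1" by auto
        show "M1 (int BC + int w) = cand w \<and> M1 (int P0 + int SS * int w) = bdf w \<and> M1 (int P0 + int SS * int w + 1) = vlf w"
          using C e rd hp1'[OF nn(1)] hp1'[OF nn(2)] tr by (simp add: bdf_def vlf_def)
      qed
      note IL = inner_loop[where ?M0.0=M1 and n=N and S=SS and cv="cand v" and CB=BC and ?P0.0=P0 and c=cand and bd=bdf and vl=vlf,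
          OF r1(9) r1(7) r1(6) r1(10) r72(1) r72(3) r72(4) P0r r72(5) r72(6) r72(7) mem]
      show ?thesis unfolding p72
      proof (rule wp_bind[OF IL], goal_cases)
        case (1 pc2 M2)
        have pc2: "pc2 = 90" and inr: "(M2 (-40), M2 (-41), M2 (-42)) = inner cand bdf vlf (cand v) N"
          and fr2: "\<forall>a. nW a \<longrightarrow> M2 a = M1 a" using 1 by auto
        have fr2': "M2 a = M1 a" if ha: "-36 \<le> a \<or> a = -43 \<or> (-48 \<le> a \<and> a \<le> -45) \<or> a < -51" for a
        proof -
          have "nW a" using ha unfolding nW_def by auto
          then show ?thesis using fr2 by blast
        qed
        obtain f b ar where fba: "inner cand bdf vlf (cand v) N = (f, b, ar)" by (cases "inner cand bdf vlf (cand v) N") auto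
        have tb: "trip = (if f \<le> 0 then (1,0,0) else (0, g t (cand v) + b, ar))"
          using tab_ok[OF t1(1) _ fba[unfolded bdf_def vlf_def kk_def d_def]] cond by (simp add: trip_def d_def)
        have r2: "M2 (-1) = real T" "M2 (-2) = cP" "M2 (-3) = cI" "M2 (-4) = cB" "M2 (-5) = bP" "M2 (-7) = 1" "M2 (-8) = 0"
          "M2 (-24) = real t" "M2 (-27) = real (BT + 3 * j)" "M2 (-29) = cumX x t" "M2 (-34) = cand v"
          "M2 (-40) = f" "M2 (-41) = b" "M2 (-42) = ar" "M2 (-43) = 0"
          using fr2' r1 r72 inr fba by auto
        note P3 = seg_p3[where M=M2 and T=T and cP=cP and cI=cI and cB=cB and bP=bP and t=t and cl="BT + 3 * j"
          and X="cumX x t" and cv="cand v" and f=f and b=b and ar=ar,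
          OF r2(1) r2(2) r2(3) r2(4) r2(5) r2(6) r2(7) r2(8) r2(9) r2(10) r2(11) r2(12) r2(13) r2(14) r2(15) t1(2)]
        show ?case unfolding pc2
        proof (rule wp_bind[OF wpS_sound[OF P3]], goal_cases)
          case (1 pc3 M3)
          have hp2: "M2 a = hB j a" if "0 \<le> a" for a using fr2'[of a] hp1'[of a] that by simp
          have fr23: "M2 a = M a" if "-33 \<le> a \<and> a \<le> -1" for a using fr2'[of a] fr1'[of a] that by simp
          have pcs3: "pc3 = 116 \<or> pc3 = 121" using 1 by auto
          then show ?case
          proof
            assume p3: "pc3 = 116"
            have f0: "f \<le> 0" and M3e: "M3 = M2" using 1 p3 by auto
            have r3: "M3 (-7) = 1" "M3 (-8) = 0" "M3 (-27) = real (BT + 3 * j)" using M3e r2 by auto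
            note B = seg_bad[where M=M3 and cl="BT + 3*j", OF r3]
            show ?thesis unfolding p3
            proof (rule wp_mono[OF wpS_sound[OF B]], simp, goal_cases)
              case (1 pc M')
              have hpos: "\<forall>a. 0 \<le> a \<longrightarrow> M' a = (M3(int (BT + 3 * j) := 1, int (BT + 3 * j) + 1 := 0, int (BT + 3 * j) + 2 := 0)) a"
                and hneg: "\<forall>a. a < 0 \<and> a \<noteq> -45 \<longrightarrow> M' a = M3 a" and pc: "pc = 121" using 1 by auto
              have A: "\<forall>a. -33 \<le> a \<and> a \<le> -1 \<longrightarrow> M' a = M a"
              proof (intro allI impI)
                fix a :: int assume a: "-33 \<le> a \<and> a \<le> -1"
                then have "M' a = M3 a" using hneg by simp
                then show "M' a = M a" using fr23[OF a] M3e by simp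
              qed
              have B: "\<forall>a\<ge>0. M' a = ((hB j)(int BT + 3*int j := fst trip, int BT + 3*int j + 1 := fst (snd trip), int BT + 3*int j + 2 := snd (snd trip))) a"
              proof (intro allI impI)
                fix a :: int assume a: "0 \<le> a"
                have "M' a = (M3(int (BT + 3 * j) := 1, int (BT + 3 * j) + 1 := 0, int (BT + 3 * j) + 2 := 0)) a" using hpos a by blast
                then show "M' a = ((hB j)(int BT + 3*int j := fst trip, int BT + 3*int j + 1 := fst (snd trip), int BT + 3*int j + 2 := snd (snd trip))) a"
                  using hp2[OF a] tb f0 M3e by simp
              qed
              show ?case using pc A B by (simp add: trip_def t_def v_def k_def)
            qed
          next
            assume p3: "pc3 = 121"
            have f0: "\<not> f \<le> 0" and hpos: "\<forall>a. 0 \<le> a \<longrightarrow> M3 a = (M2(int (BT + 3 * j) := 0,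
               int (BT + 3 * j) + 1 := max (fI T cP cI bP t (cumX x t) (cand v)) (fB T cP cB bP t (cumX x t) (cand v)) + b,
               int (BT + 3 * j) + 2 := ar)) a"
              and hneg: "\<forall>a. a < 0 \<and> a \<noteq> -44 \<and> a \<noteq> -45 \<and> a \<noteq> -46 \<and> a \<noteq> -47 \<and> a \<noteq> -48 \<longrightarrow> M3 a = M2 a"
              using 1 p3 by auto
            have A: "\<forall>a. -33 \<le> a \<and> a \<le> -1 \<longrightarrow> M3 a = M a"
            proof (intro allI impI)
              fix a :: int assume a: "-33 \<le> a \<and> a \<le> -1"
              then have "M3 a = M2 a" using hneg by simp
              then show "M3 a = M a" using fr23[OF a] by simp
            qed
            have B: "\<forall>a\<ge>0. M3 a = ((hB j)(int BT + 3*int j := fst trip, int BT + 3*int j + 1 := fst (snd trip), int BT + 3*int j + 2 := snd (snd trip))) a"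
            proof (intro allI impI)
              fix a :: int assume a: "0 \<le> a"
              have "M3 a = (M2(int (BT + 3 * j) := 0,
               int (BT + 3 * j) + 1 := max (fI T cP cI bP t (cumX x t) (cand v)) (fB T cP cB bP t (cumX x t) (cand v)) + b,
               int (BT + 3 * j) + 2 := ar)) a" using hpos a by blast
              then show "M3 a = ((hB j)(int BT + 3*int j := fst trip, int BT + 3*int j + 1 := fst (snd trip), int BT + 3*int j + 2 := snd (snd trip))) a"
                using hp2[OF a] tb f0 by (simp add: g_def)
            qed
            show ?thesis using p3 A B by (intro wp_done) (simp add: trip_def t_def v_def k_def)
          qed
        qed
      qed
    qed
  qed
qed

lemma cumX_Suc: "cumX x (Suc t) = cumX x t + x (Suc t)"
  by (simp add: cumX_def)

lemma adv_step:
  assumes I: "IBj j M" and jr: "n0 \<le> j" "j < n0 + nB"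
    and fr: "\<forall>a. -33 \<le> a \<and> a \<le> -1 \<longrightarrow> Ma a = M a"
    and hp: "\<forall>a\<ge>0. Ma a = ((hB j)(int BT + 3*int j := fst (tab (dt j) (dv j) (dk j)),
        int BT + 3*int j + 1 := fst (snd (tab (dt j) (dv j) (dk j))), int BT + 3*int j + 2 := snd (snd (tab (dt j) (dv j) (dk j))))) a"
  shows "wp prog 121 Ma 20 (\<lambda>pc M'. pc = 47 \<and> IBj (Suc j) M')"
proof -
  define t where "t = dt j"
  define v where "v = dv j"
  define k where "k = dk j"
  have t1: "1 \<le> t" "t \<le> T" using j_range[OF jr] by (auto simp: t_def)
  have cr: "cregs M" and r: "M (-23) = Cmax" "M (-24) = real t" "M (-25) = real v" "M (-26) = real k"
    "M (-27) = real (BT + 3 * j)" "M (-28) = real (BT + (t - 1) * LS)" "M (-33) = real (3 * t + 3)"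
    "M (-29) = cumX x t" "M (-30) = lo t" "M (-31) = hi t" "M (-32) = Dhat t"
    using I t1 unfolding IBj_def t_def v_def k_def by auto
  have fr': "Ma a = M a" if "-33 \<le> a" "a \<le> -1" for a using fr that by blast
  have cra: "cregs Ma" by (rule cregs_frame[OF cr]) (use fr' in auto)
  have ra: "Ma (-1) = real T" "Ma (-7) = 1" "Ma (-8) = 0" "Ma (-9) = 3" "Ma (-10) = real N" "Ma (-16) = real LS"
    using cra unfolding cregs_def by auto
  have ra2: "Ma (-23) = Cmax" "Ma (-24) = real t" "Ma (-25) = real v" "Ma (-26) = real k"
    "Ma (-27) = real (BT + 3 * j)" "Ma (-28) = real (BT + (t - 1) * LS)" "Ma (-33) = real (3 * t + 3)"
    "Ma (-29) = cumX x t" "Ma (-30) = lo t" "Ma (-31) = hi t" "Ma (-32) = Dhat t"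
    using r fr' by auto
  obtain b0 vl0 ar0 where tr: "tab (dt j) (dv j) (dk j) = (b0, vl0, ar0)" by (cases "tab (dt j) (dv j) (dk j)") auto
  have hpa: "Ma a = hB (Suc j) a" if "0 \<le> a" for a
    using hp that hB_upd[OF that tr] tr by simp
  note S = seg_adv[where M=Ma and T=T and N=N and LS=LS and t=t and v=v and k=k,
      OF ra(1) ra(2) ra(3) ra(4) ra(5) ra(6) ra2(2) ra2(3) ra2(4) ra2(7)]
  show ?thesis
  proof (rule wp_mono[OF wpS_sound[OF S]], simp, goal_cases)
    case (1 pc M')
    have pc: "pc = 47" and ap: "adv_post T N LS t v k Ma M'" and fA: "\<forall>a. fA a \<longrightarrow> M' a = Ma a" using 1 by auto
    have fA': "M' a = Ma a" if "0 \<le> a \<or> (-23 \<le> a \<and> a \<le> -1)" for a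
    proof -
      have "fA a" using that unfolding fA_def by auto
      then show ?thesis using fA by blast
    qed
    have crM: "cregs M'" by (rule cregs_frame[OF cra]) (use fA' in auto)
    have c23: "M' (-23) = Cmax" using fA'[of "-23"] ra2 by simp
    have hpM: "\<forall>a\<ge>0. M' a = hB (Suc j) a" using fA' hpa by auto
    have c27: "M' (-27) = real (BT + 3 * Suc j)" using ap ra2 unfolding adv_post_def by simp
    note dc = dec_next[of j, folded t_def v_def k_def]
    have regs: "M' (-24) = real (dt (Suc j)) \<and> M' (-25) = real (dv (Suc j)) \<and> M' (-26) = real (dk (Suc j)) \<and>
       M' (-28) = real (BT + (dt (Suc j) - 1) * LS) \<and> M' (-33) = real (3 * dt (Suc j) + 3) \<and>
       (dt (Suc j) \<le> T \<longrightarrow> M' (-29) = cumX x (dt (Suc j)) \<and> M' (-30) = lo (dt (Suc j)) \<and>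
          M' (-31) = hi (dt (Suc j)) \<and> M' (-32) = Dhat (dt (Suc j)))"
    proof (cases "Suc k \<le> T")
      case True
      then show ?thesis using ap dc(1) ra2 t1 unfolding adv_post_def by simp
    next
      case F1: False
      show ?thesis
      proof (cases "Suc v < N")
        case True
        then show ?thesis using ap dc(2) F1 ra2 t1 unfolding adv_post_def by simp
      next
        case F2: False
        have d3: "dt (Suc j) = Suc t" "dv (Suc j) = 0" "dk (Suc j) = 0" using dc(3) F1 F2 by auto
        have ap3: "M' (-26) = 0" "M' (-25) = 0" "M' (-24) = real (Suc t)" "M' (-28) = Ma (-28) + real LS"
          "M' (-33) = Ma (-33) + 3" "M' (-29) = Ma (-29) + M' (6 + 3 * int t)" "M' (-32) = M' (7 + 3 * int t)"
          "M' (-30) = M' (7 + 3 * int t) - M' (8 + 3 * int t)" "M' (-31) = M' (7 + 3 * int t) + M' (8 + 3 * int t)"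
          using ap F1 F2 unfolding adv_post_def by auto
        have A: "M' (-28) = real (BT + (Suc t - 1) * LS)"
        proof -
          have "real (BT + (t - 1) * LS) + real LS = real (BT + t * LS)" using t1
            by (cases t) (auto simp: algebra_simps)
          then show ?thesis using ap3(4) ra2(6) by simp
        qed
        have B: "M' (-33) = real (3 * Suc t + 3)" using ap3(5) ra2(7) by simp
        have C: "Suc t \<le> T \<longrightarrow> M' (-29) = cumX x (Suc t) \<and> M' (-30) = lo (Suc t) \<and>
          M' (-31) = hi (Suc t) \<and> M' (-32) = Dhat (Suc t)"
        proof
          assume st: "Suc t \<le> T"
          have e: "6 + 3 * int t = int (3 * Suc t + 3)" "7 + 3 * int t = int (3 * Suc t + 4)" "8 + 3 * int t = int (3 * Suc t + 5)" by simp_all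
          have lt: "int (3 * Suc t + 3) < int BT" "int (3 * Suc t + 4) < int BT" "int (3 * Suc t + 5) < int BT"
            "int (3 * Suc t + 3) < int BC" "int (3 * Suc t + 4) < int BC" "int (3 * Suc t + 5) < int BC"
            using st BT_gt by (auto simp: BC_def)
          have rd: "M' (6 + 3 * int t) = x (Suc t)" "M' (7 + 3 * int t) = Dhat (Suc t)" "M' (8 + 3 * int t) = Delta (Suc t)"
          proof -
            have z: "0 \<le> int (3 * Suc t + 3)" "0 \<le> int (3 * Suc t + 4)" "0 \<le> int (3 * Suc t + 5)" by simp_all
            have q: "\<And>a. 0 \<le> a \<Longrightarrow> a < int BC \<Longrightarrow> M' a = M0 a"
            proof -
              fix a :: int assume a: "0 \<le> a" "a < int BC"
              have "a < int BT" using a BT_gt by linarith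
              then show "M' a = M0 a" using hpM a hB_low hA_low by simp
            qed
            have s1: "1 \<le> Suc t" by simp
            show "M' (6 + 3 * int t) = x (Suc t)" unfolding e using q[OF z(1) lt(4)] M0_reads(1)[OF s1 st] by (simp only:)
            show "M' (7 + 3 * int t) = Dhat (Suc t)" unfolding e using q[OF z(2) lt(5)] M0_reads(2)[OF s1 st] by (simp only:)
            show "M' (8 + 3 * int t) = Delta (Suc t)" unfolding e using q[OF z(3) lt(6)] M0_reads(3)[OF s1 st] by (simp only:)
          qed
          show "M' (-29) = cumX x (Suc t) \<and> M' (-30) = lo (Suc t) \<and> M' (-31) = hi (Suc t) \<and> M' (-32) = Dhat (Suc t)"
            using ap3 rd ra2 by (simp add: cumX_Suc lo_def hi_def)
        qed
        show ?thesis unfolding d3 using ap3(1) ap3(2) ap3(3) A B C by (simp only: diff_Suc_1 of_nat_0 simp_thms)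
      qed
    qed
    show ?case unfolding IBj_def using pc crM c23 hpM c27 regs by simp
  qed
qed

lemma dp_body: assumes "i < nB" "IBj (n0 + i) M"
  shows "wp prog 47 M (N * 20 + 111) (\<lambda>pc M'. pc = 47 \<and> IBj (n0 + Suc i) M')"
proof -
  have jr: "n0 \<le> n0 + i" "n0 + i < n0 + nB" using assms by auto
  have "wp prog 47 M ((40 + (N * 20 + 1 + (40 + 10))) + 20) (\<lambda>pc M'. pc = 47 \<and> IBj (Suc (n0 + i)) M')"
  proof (rule wp_bind[OF cell_step[OF assms(2) jr]], goal_cases)
    case (1 pc' M')
    then show ?case using adv_step[OF assms(2) jr, of M'] by auto
  qed
  then show ?thesis by (rule wp_mono) auto
qed

lemma dec_n0: "dt n0 = 1" "dv n0 = 0" "dk n0 = 0"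
  using dec_of[OF N_pos TT1_pos, of 1] by (auto simp: n0_def)

lemma dec_end: "dt (n0 + nB) = Suc T"
proof -
  have "n0 + nB = (Suc T * N + 0) * TT1 + 0" by (simp add: n0_def nB_def algebra_simps)
  then show ?thesis using dec_of[OF N_pos TT1_pos, of "Suc T"] by simp
qed

lemma phaseB: assumes "IA T M"
  shows "wp prog 39 M (30 + (nB * (N * 20 + 111) + 5)) (\<lambda>pc M'. pc = 141 \<and> IBj (n0 + nB) M')"
proof -
  have cr: "cregs M" and c23: "M (-23) = Cmax" and hp: "\<forall>a\<ge>0. M a = hA T a"
    using assms unfolding IA_def Cmax_def by auto
  have r: "M (-7) = 1" "M (-8) = 0" "M (-9) = 3" "M (-14) = real BT" "M (-16) = real LS"
    using cr unfolding cregs_def by auto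
  have rd: "M 6 = x 1" "M 7 = Dhat 1" "M 8 = Delta 1"
  proof -
    have q: "\<And>a. 0 \<le> a \<Longrightarrow> a < int BC \<Longrightarrow> M a = M0 a" using hp hA_low by simp
    have lt: "(6::int) < int BC" "(7::int) < int BC" "(8::int) < int BC" using T1 by (auto simp: BC_def)
    have T1': "1 \<le> (1::nat)" "1 \<le> T" using T1 by auto
    show "M 6 = x 1" using q[OF _ lt(1)] M0_reads(1)[OF T1'] by simp
    show "M 7 = Dhat 1" using q[OF _ lt(2)] M0_reads(2)[OF T1'] by simp
    show "M 8 = Delta 1" using q[OF _ lt(3)] M0_reads(3)[OF T1'] by simp
  qed
  note S = seg_init[where M=M and BT=BT and LS=LS, OF r rd]
  have W0: "wp prog 39 M 30 (\<lambda>pc M'. pc = 47 \<and> IBj (n0 + 0) M')"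
  proof (rule wp_mono[OF wpS_sound[OF S]], simp, goal_cases)
    case (1 pc M')
    have fA: "\<forall>a. fA a \<longrightarrow> M' a = M a" using 1 by auto
    have fA': "M' a = M a" if "0 \<le> a \<or> (-23 \<le> a \<and> a \<le> -1)" for a
    proof -
      have "fA a" using that unfolding fA_def by auto
      then show ?thesis using fA by blast
    qed
    have crM: "cregs M'" by (rule cregs_frame[OF cr]) (use fA' in auto)
    have hpM: "\<forall>a\<ge>0. M' a = hB n0 a" using fA' hp hB_init by auto
    have c23': "M' (-23) = Cmax" using fA'[of "-23"] c23 by simp
    have e: "real (BT + 3 * n0) = real (BT + LS)" by (simp add: n0_def LS_def SS_def)
    have cum1: "cumX x 1 = x 1" by (simp add: cumX_def)
    show ?case unfolding IBj_def using 1 crM hpM c23' e cum1 by (simp add: lo_def hi_def dec_n0)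
  qed
  have body: "\<And>i M. i < nB \<Longrightarrow> (\<lambda>i M. IBj (n0 + i) M) i M \<Longrightarrow>
      wp prog 47 M (N * 20 + 111) (\<lambda>pc M'. pc = 47 \<and> (\<lambda>i M. IBj (n0 + i) M) (Suc i) M')"
    using dp_body by simp
  have ex: "wp prog 47 M' 5 (\<lambda>pc M'. pc = 141 \<and> IBj (n0 + nB) M')" if I: "IBj (n0 + nB) M'" for M'
  proof -
    have a: "M' (-24) = real (Suc T)" "M' (-1) = real T" "M' (-8) = 0"
      using I dec_end unfolding IBj_def cregs_def by auto
    note S2 = seg_head_exit[where M=M' and t="Suc T" and T=T, OF a(1) a(2) _ a(3)]
    show ?thesis by (rule wp_mono[OF wpS_sound[OF S2]]) (use I in auto)
  qed
  have L: "wp prog 47 M' (nB * (N * 20 + 111) + 5) (\<lambda>pc M'. pc = 141 \<and> IBj (n0 + nB) M')"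
    if "IBj (n0 + 0) M'" for M'
    using wp_loop[where I="\<lambda>i M. IBj (n0 + i) M" and n=nB, OF body ex] that by simp
  show ?thesis using wp_bind[OF W0] L by blast
qed

lemma cand_le_Cmax: "w < N \<Longrightarrow> cand w \<le> Cmax"
proof -
  assume w: "w < N"
  define s where "s = w div 3 + 1"
  have s: "s \<in> {1..T}" using w by (auto simp: s_def N_def)
  have nn: "\<forall>i\<in>{1..T}. 0 \<le> Dhat i + Delta i" using Dnn Del by auto
  have "cand w \<le> Dhat s + Delta s" using Del s unfolding cand_def s_def by auto
  also have "\<dots> \<le> Cmax" unfolding Cmax_def using s nn by (intro member_le_sum) auto
  finally show ?thesis .
qed

definition nE :: nat where "nE = n0 + nB"

definition fin_ok :: "nat \<Rightarrow> bool" where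
  "fin_ok ws \<longleftrightarrow> ws < N \<and> fst (tab T ws Gamma) \<le> 0 \<and>
     (\<forall>D'. (\<forall>t\<in>{1..T}. D' t = cand (bt T ws Gamma t)) \<longrightarrow> D' \<in> UU \<and> (\<forall>D\<in>UU. obj D \<le> obj D'))"

lemma phaseC: assumes I: "IBj nE M"
  shows "wp prog 141 M (20 + (N * 20 + 1 + 5)) (\<lambda>pc M'. pc = 151 \<and> cregs M' \<and> (\<forall>a\<ge>0. M' a = hB nE a) \<and>
     (\<exists>ws. fin_ok ws \<and> M' (-42) = real ws))"
proof -
  have cr: "cregs M" and hp: "\<forall>a\<ge>0. M a = hB nE a" and c23: "M (-23) = Cmax"
    and r28: "M (-28) = real (BT + T * LS)"
    using I dec_end unfolding IBj_def nE_def by auto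
  have r: "M (-8) = 0" "M (-9) = 3" "M (-6) = real Gamma" "M (-13) = real BC"
    "M (-7) = 1" "M (-10) = real N" "M (-12) = real SS" using cr unfolding cregs_def by auto
  note S = seg_dpx[where M=M and G=Gamma and rb="BT + T * LS" and cm=Cmax and BC=BC, OF r(1) r(2) r(3) r28 c23 r(4)]
  show ?thesis
  proof (rule wp_bind[OF wpS_sound[OF S]], goal_cases)
    case (1 pc1 M1)
    have pc1: "pc1 = 72" and r1: "M1 (-37) = real (BT + T * LS + 3 * Gamma)" "M1 (-34) = Cmax" "M1 (-38) = 0"
      "M1 (-39) = real BC" "M1 (-40) = 0" "M1 (-41) = 0" "M1 (-42) = 0" "M1 (-43) = 1"
      and fr1: "\<forall>a. nP1 a \<longrightarrow> M1 a = M a" using 1 by auto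
    have fr1': "M1 a = M a" if "-33 \<le> a \<or> a < -44" for a
    proof -
      have "nP1 a" using that unfolding nP1_def by auto
      then show ?thesis using fr1 by blast
    qed
    have r1b: "M1 (-10) = real N" "M1 (-8) = 0" "M1 (-7) = 1" "M1 (-12) = real SS"
      using fr1' r by auto
    define P0 where "P0 = BT + T * LS + 3 * Gamma"
    define bdf where "bdf = (\<lambda>w. fst (tab T w Gamma))"
    define vlf where "vlf = (\<lambda>w. fst (snd (tab T w Gamma)))"
    have GT1: "Gamma < TT1" using GT by (simp add: TT1_def)
    have mem: "\<forall>w<N. M1 (int BC + int w) = cand w \<and> M1 (int P0 + int SS * int w) = bdf w \<and> M1 (int P0 + int SS * int w + 1) = vlf w"
    proof (intro allI impI)
      fix w assume w: "w < N"
      define j' where "j' = (T * N + w) * TT1 + Gamma"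
      have e: "int P0 + int SS * int w = int BT + 3 * int j'"
      proof -
        have "P0 + SS * w = BT + 3 * j'" unfolding P0_def j'_def LS_def SS_def by (simp add: algebra_simps)
        then show ?thesis by (metis of_nat_add of_nat_mult of_nat_numeral)
      qed
      have jlt: "j' < nE"
      proof -
        have "j' < (T * N + w) * TT1 + TT1" using GT1 by (simp add: j'_def)
        also have "\<dots> = (T * N + w + 1) * TT1" by (simp add: algebra_simps)
        also have "\<dots> \<le> (T * N + N) * TT1" using w by (intro mult_right_mono) auto
        also have "\<dots> = nE" by (simp add: nE_def n0_def nB_def algebra_simps)
        finally show ?thesis .
      qed
      have dj: "dt j' = T" "dv j' = w" "dk j' = Gamma" using dec_of[OF w GT1] by (auto simp: j'_def)
      obtain b0 vl0 ar0 where tr: "tab T w Gamma = (b0, vl0, ar0)" by (cases "tab T w Gamma") auto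
      have rd: "hB nE (int BT + 3 * int j') = b0" "hB nE (int BT + 3 * int j' + 1) = vl0"
        using hB_read[OF jlt] tr dj by auto
      have C: "M1 (int BC + int w) = cand w"
      proof -
        have "int BC + int w < int BT" using BT_gt w by linarith
        then show ?thesis using fr1' hp hB_low hA_C w by simp
      qed
      have nn: "0 \<le> int BT + 3 * int j'" "0 \<le> int BT + 3 * int j' + 1" by auto
      show "M1 (int BC + int w) = cand w \<and> M1 (int P0 + int SS * int w) = bdf w \<and> M1 (int P0 + int SS * int w + 1) = vlf w"
        using C e rd fr1'[of "int BT + 3 * int j'"] fr1'[of "int BT + 3 * int j' + 1"] hp nn tr by (simp add: bdf_def vlf_def)
    qed
    have P0r: "M1 (-37) = real P0" using r1(1) by (simp add: P0_def)
    note IL = inner_loop[where ?M0.0=M1 and n=N and S=SS and cv=Cmax and CB=BC and ?P0.0=P0 and c=cand and bd=bdf and vl=vlf,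
          OF r1b(1) r1b(2) r1b(3) r1b(4) r1(2) r1(3) r1(4) P0r r1(5) r1(6) r1(7) mem]
    show ?case unfolding pc1
    proof (rule wp_bind[OF IL], goal_cases)
      case (1 pc2 M2)
      have pc2: "pc2 = 90" and inr: "(M2 (-40), M2 (-41), M2 (-42)) = inner cand bdf vlf Cmax N"
        and fr2: "\<forall>a. nW a \<longrightarrow> M2 a = M1 a" using 1 by auto
      have fr2': "M2 a = M1 a" if ha: "-36 \<le> a \<or> a = -43" for a
      proof -
        have "nW a" using ha unfolding nW_def by auto
        then show ?thesis using fr2 by blast
      qed
      obtain f b ar where fba: "inner cand bdf vlf Cmax N = (f, b, ar)" by (cases "inner cand bdf vlf Cmax N") auto
      obtain ws where ws: "ws < N" "ar = real ws" "fst (tab T ws Gamma) \<le> 0"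
        "\<forall>D'. (\<forall>t\<in>{1..T}. D' t = cand (bt T ws Gamma t)) \<longrightarrow> D' \<in> UU \<and> (\<forall>D\<in>UU. obj D \<le> obj D')"
        using final_opt[OF _ fba[unfolded bdf_def vlf_def]] cand_le_Cmax by blast
      have r2: "M2 (-43) = 1" "M2 (-8) = 0" using fr2' r1 r1b by auto
      note F = seg_fin[where M=M2, OF r2]
      show ?case unfolding pc2
      proof (rule wp_mono[OF wpS_sound[OF F]], simp, goal_cases)
        case (1 pc M3)
        have pc: "pc = 151" and M3e: "M3 = M2" using 1 by auto
        have crM: "cregs M3" by (rule cregs_frame[OF cr]) (use fr2' fr1' M3e in auto)
        have hpM: "\<forall>a\<ge>0. M3 a = hB nE a" using fr2' fr1' hp M3e by auto
        have "M3 (-42) = real ws" using inr fba ws M3e by simp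
        then show ?case using pc crM hpM ws unfolding fin_ok_def by blast
      qed
    qed
  qed
qed

definition hD :: "nat \<Rightarrow> nat \<Rightarrow> int \<Rightarrow> real" where
  "hD ws i a = (if int BD + int (T - i) < a \<and> a \<le> int BD + int T then cand (bt T ws Gamma (nat (a - int BD))) else hB nE a)"

definition ID :: "nat \<Rightarrow> nat \<Rightarrow> (int \<Rightarrow> real) \<Rightarrow> bool" where
  "ID ws i M \<longleftrightarrow> cregs M \<and> M (-24) = real (T - i) \<and> M (-52) = real (BD + (T - i)) \<and>
    (\<exists>v k. M (-25) = real v \<and> M (-26) = real k \<and> v < N \<and> k \<le> T \<and> (1 \<le> T - i \<longrightarrow> fst (tab (T - i) v k) \<le> 0) \<and>
       (\<forall>i'. 1 \<le> i' \<and> i' \<le> T - i \<longrightarrow> bt T ws Gamma i' = bt (T - i) v k i')) \<and>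
    (\<forall>a\<ge>0. M a = hD ws i a)"

lemma bt_self: "bt t v k t = v" by (cases t) auto

lemma bt_Suc_le: "i' \<le> t \<Longrightarrow> bt (Suc t) v k i' = bt t (nat \<lfloor>snd (snd (tab (Suc t) v k))\<rfloor>) (k - dev (Suc t) v) i'"
  by simp

lemma feas_step:
  assumes t: "1 \<le> t" and v: "v < N" and b: "fst (tab t v k) \<le> 0"
  shows "\<exists>w. w < N \<and> snd (snd (tab t v k)) = real w \<and> dev t v \<le> k \<and> fst (tab (t - 1) w (k - dev t v)) \<le> 0 \<and>
     nat \<lfloor>snd (snd (tab t v k))\<rfloor> = w"
proof -
  have P: "tabP t v k" using tab_all[OF v] .
  obtain w where w: "w < N" "snd (snd (tab t v k)) = real w" using P unfolding tabP_def by blast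
  have vb: "valid t (bt t v k) k" "bt t v k t = v" using P b unfolding tabP_def by blast+
  obtain t' where t': "t = Suc t'" using t by (cases t) auto
  have nw: "nat \<lfloor>snd (snd (tab t v k))\<rfloor> = w" using w by simp
  have vs: "valid t' (bt t v k) (k - dev t v)" "dev t v \<le> k"
    using vb unfolding t' valid_Suc by auto
  have eq: "bt t v k i = bt t' w (k - dev t v) i" if "1 \<le> i" "i \<le> t'" for i
    using that nw unfolding t' by simp
  have "valid t' (bt t' w (k - dev t v)) (k - dev t v)" using vs(1) valid_cong[of t' "bt t v k" "bt t' w (k - dev t v)"] eq by simp
  moreover have "bt t' w (k - dev t v) t' = w" by (rule bt_self)
  ultimately have "fst (tab t' w (k - dev t v)) \<le> 0" using tab_all[OF w(1), of t' "k - dev t v"] unfolding tabP_def by blast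
  then show ?thesis using w vs(2) nw t' by auto
qed

lemma phaseD:
  assumes fo: "fin_ok ws" and cr: "cregs M" and hp: "\<forall>a\<ge>0. M a = hB nE a" and r42: "M (-42) = real ws"
  shows "wp prog 151 M (10 + (T * 40 + 5)) (\<lambda>pc M'. pc = 183 \<and> cregs M' \<and> (\<forall>a\<ge>0. M' a = hD ws T a))"
proof -
  have wsN: "ws < N" and wsb: "fst (tab T ws Gamma) \<le> 0" using fo unfolding fin_ok_def by auto
  have crr: "M (-1) = real T" "M (-6) = real Gamma" "M (-15) = real BD" using cr unfolding cregs_def by auto
  note S0 = seg_bt0[where M=M]
  have W0: "wp prog 151 M 10 (\<lambda>pc M'. pc = 155 \<and> ID ws 0 M')"
  proof (rule wp_mono[OF wpS_sound[OF S0]], simp, goal_cases)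
    case (1 pc M')
    have pc: "pc = 155" and r: "M' (-24) = M (-1)" "M' (-26) = M (-6)" "M' (-25) = M (-42)" "M' (-52) = M (-15) + M (-1)"
      and fr: "\<forall>a. a \<noteq> -24 \<and> a \<noteq> -25 \<and> a \<noteq> -26 \<and> a \<noteq> -52 \<longrightarrow> M' a = M a" using 1 by auto
    have crM: "cregs M'" by (rule cregs_frame[OF cr]) (use fr in auto)
    have hpM: "\<forall>a\<ge>0. M' a = hD ws 0 a" using fr hp unfolding hD_def by auto
    have ex: "\<exists>v k. M' (-25) = real v \<and> M' (-26) = real k \<and> v < N \<and> k \<le> T \<and> (1 \<le> T - 0 \<longrightarrow> fst (tab (T - 0) v k) \<le> 0) \<and>
       (\<forall>i'. 1 \<le> i' \<and> i' \<le> T - 0 \<longrightarrow> bt T ws Gamma i' = bt (T - 0) v k i')"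
      using r crr r42 wsN wsb GT by (intro exI[of _ ws] exI[of _ Gamma]) auto
    show ?case unfolding ID_def using pc crM hpM ex r crr by simp
  qed
  have body: "wp prog 155 M (40) (\<lambda>pc M'. pc = 155 \<and> ID ws (Suc i) M')" if i: "i < T" and I: "ID ws i M" for i M
  proof -
    define t where "t = T - i"
    have t1: "1 \<le> t" "t \<le> T" using i by (auto simp: t_def)
    have cr: "cregs M" and r24: "M (-24) = real t" and r52: "M (-52) = real (BD + t)" and hp: "\<forall>a\<ge>0. M a = hD ws i a"
      using I unfolding ID_def t_def by auto
    obtain v k where vk: "M (-25) = real v" "M (-26) = real k" "v < N" "k \<le> T" "fst (tab t v k) \<le> 0"
      "\<forall>i'. 1 \<le> i' \<and> i' \<le> t \<longrightarrow> bt T ws Gamma i' = bt t v k i'"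
      using I t1 unfolding ID_def t_def by auto
    have crr: "M (-7) = 1" "M (-8) = 0" "M (-9) = 3" "M (-10) = real N" "M (-11) = real TT1" "M (-13) = real BC"
      "M (-14) = real BT" using cr unfolding cregs_def by auto
    have hpB: "M a = hB nE a" if "0 \<le> a" "a \<le> int BD" for a using hp that unfolding hD_def by auto
    have kT1: "k < TT1" using vk(4) by (simp add: TT1_def)
    define ar where "ar = snd (snd (tab t v k))"
    have R1: "M \<lfloor>real BC + real v\<rfloor> = cand v"
    proof -
      have e: "\<lfloor>real BC + real v\<rfloor> = int BC + int v" by simp
      have "int BC + int v < int BT" "int BC + int v \<le> int BD" using BT_gt vk(3) by (auto simp: BD_def)
      then show ?thesis unfolding e using hpB hB_low hA_C vk(3) by simp
    qed
    have R2: "M \<lfloor>3 * real t + 4\<rfloor> = Dhat t"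
    proof -
      have e: "\<lfloor>3 * real t + 4\<rfloor> = int (3 * t + 4)" by (metis floor_of_nat of_nat_add of_nat_mult of_nat_numeral)
      have lt: "int (3 * t + 4) < int BC" "int (3 * t + 4) \<le> int BD" "int (3 * t + 4) < int BT" using t1 BT_gt by (auto simp: BC_def BD_def)
      show ?thesis unfolding e using hpB[of "int (3 * t + 4)"] lt hB_low hA_low M0_reads(2)[OF t1] by simp
    qed
    define j' where "j' = (t * N + v) * TT1 + k"
    have R3: "M \<lfloor>((real t * real N + real v) * real TT1 + real k) * 3 + real BT + 1 + 1\<rfloor> = ar"
    proof -
      have e0: "((real t * real N + real v) * real TT1 + real k) * 3 + real BT + 1 + 1 = real (BT + 3 * j' + 2)"
        by (simp add: j'_def algebra_simps)
      have e: "\<lfloor>((real t * real N + real v) * real TT1 + real k) * 3 + real BT + 1 + 1\<rfloor> = int BT + 3 * int j' + 2"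
        unfolding e0 by simp
      have jlt: "j' < nE"
      proof -
        have "j' < (t * N + v) * TT1 + TT1" using kT1 by (simp add: j'_def)
        also have "\<dots> = (t * N + v + 1) * TT1" by (simp add: algebra_simps)
        also have "\<dots> \<le> (t * N + N) * TT1" using vk(3) by (intro mult_right_mono) auto
        also have "\<dots> \<le> (T * N + N) * TT1" using t1 by (intro mult_right_mono) auto
        also have "\<dots> = nE" by (simp add: nE_def n0_def nB_def algebra_simps)
        finally show ?thesis .
      qed
      have dj: "dt j' = t" "dv j' = v" "dk j' = k" using dec_of[OF vk(3) kT1] by (auto simp: j'_def)
      obtain b0 vl0 ar0 where tr: "tab t v k = (b0, vl0, ar0)" by (cases "tab t v k") auto
      have rd: "hB nE (int BT + 3 * int j' + 2) = ar0" using hB_read(3)[OF jlt] tr dj by auto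
      have big: "int BD + int T < int BT + 3 * int j' + 2" by (auto simp: BT_def TT1_def)
      have "M (int BT + 3 * int j' + 2) = hB nE (int BT + 3 * int j' + 2)" using hp big unfolding hD_def by auto
      then show ?thesis unfolding e using rd tr by (simp add: ar_def)
    qed
    note S = seg_btbody[where M=M and N=N and ?T1.0=TT1 and BC=BC and BT=BT and t=t and v=v and k=k and dp="BD + t"
       and cv="cand v" and dh="Dhat t" and ar=ar, OF crr r24 t1(1) vk(1) vk(2) r52 R1 R2 R3]
    obtain w where fw: "w < N" "ar = real w" "dev t v \<le> k" "fst (tab (t - 1) w (k - dev t v)) \<le> 0"
      "nat \<lfloor>ar\<rfloor> = w" using feas_step[OF t1(1) vk(3) vk(5)] unfolding ar_def by blast
    show ?thesis
    proof (rule wp_mono[OF wpS_sound[OF S]], simp, goal_cases)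
      case (1 pc M')
      have pc: "pc = 155" and r: "M' (-24) = real (t - 1)" "M' (-25) = ar"
        "M' (-26) = real k - real (if cand v = Dhat t then 0 else 1::nat)" "M' (-52) = real (BD + t) - 1"
        and hpos: "\<forall>a. 0 \<le> a \<longrightarrow> M' a = (M(int (BD + t) := cand v)) a"
        and hneg: "\<forall>a. a < 0 \<and> a \<noteq> -24 \<and> a \<noteq> -25 \<and> a \<noteq> -26 \<and> a \<noteq> -32 \<and> a \<noteq> -34 \<and> a \<noteq> -35 \<and> a \<noteq> -44 \<and> a \<noteq> -45 \<and> a \<noteq> -52 \<and> a \<noteq> -53 \<longrightarrow> M' a = M a"
        using 1 by auto
      have crM: "cregs M'" by (rule cregs_frame[OF cr]) (use hneg in auto)
      have tt: "T - Suc i = t - 1" by (simp add: t_def)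
      have r26: "M' (-26) = real (k - dev t v)" using r(3) fw(3) by (simp add: dev_def of_nat_diff)
      have r52: "M' (-52) = real (BD + (t - 1))" using r(4) t1 by (simp add: of_nat_diff)
      have btrel: "\<forall>i'. 1 \<le> i' \<and> i' \<le> t - 1 \<longrightarrow> bt T ws Gamma i' = bt (t - 1) w (k - dev t v) i'"
      proof (intro allI impI)
        fix i' assume h: "1 \<le> i' \<and> i' \<le> t - 1"
        obtain t' where t': "t = Suc t'" using t1 by (cases t) auto
        have "bt T ws Gamma i' = bt t v k i'" using vk(6) h t1 by auto
        also have "\<dots> = bt (t - 1) w (k - dev t v) i'" using h fw(5) unfolding t' ar_def by simp
        finally show "bt T ws Gamma i' = bt (t - 1) w (k - dev t v) i'" .
      qed
      have ex: "\<exists>v k. M' (-25) = real v \<and> M' (-26) = real k \<and> v < N \<and> k \<le> T \<and> (1 \<le> T - Suc i \<longrightarrow> fst (tab (T - Suc i) v k) \<le> 0) \<and>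
       (\<forall>i'. 1 \<le> i' \<and> i' \<le> T - Suc i \<longrightarrow> bt T ws Gamma i' = bt (T - Suc i) v k i')"
        unfolding tt using r(2) r26 fw vk(4) btrel by (intro exI[of _ w] exI[of _ "k - dev t v"]) auto
      have hpM: "\<forall>a\<ge>0. M' a = hD ws (Suc i) a"
      proof (intro allI impI)
        fix a :: int assume a: "0 \<le> a"
        have m: "M' a = (M(int (BD + t) := cand v)) a" using hpos a by blast
        have bts: "bt T ws Gamma t = v" using vk(6) t1 bt_self[of t v k] by auto
        show "M' a = hD ws (Suc i) a"
        proof (cases "a = int (BD + t)")
          case True
          have nt: "nat (int T - int i) = T - i" using i by linarith
          show ?thesis using True m bts t1 nt unfolding hD_def t_def by auto
        next
          case False
          then have "M' a = hD ws i a" using m hp a by simp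
          moreover have "hD ws i a = hD ws (Suc i) a" using False unfolding hD_def t_def by auto
          ultimately show ?thesis by simp
        qed
      qed
      show ?case unfolding ID_def using pc crM r(1) r52 ex hpM tt by simp
    qed
  qed
  have ex: "wp prog 155 M 5 (\<lambda>pc M'. pc = 183 \<and> cregs M' \<and> (\<forall>a\<ge>0. M' a = hD ws T a))" if I: "ID ws T M" for M
  proof -
    have a: "M (-7) = 1" "M (-8) = 0" "M (-24) = 0" using I unfolding ID_def cregs_def by auto
    note S2 = seg_btexit[where M=M, OF a]
    show ?thesis by (rule wp_mono[OF wpS_sound[OF S2]]) (use I in \<open>auto simp: ID_def\<close>)
  qed
  have L: "wp prog 155 M' (T * 40 + 5) (\<lambda>pc M'. pc = 183 \<and> cregs M' \<and> (\<forall>a\<ge>0. M' a = hD ws T a))"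
    if "ID ws 0 M'" for M'
    using wp_loop[where I="ID ws" and n=T, OF body ex] that by simp
  show ?thesis using wp_bind[OF W0] L by blast
qed

definition IE :: "nat \<Rightarrow> nat \<Rightarrow> (int \<Rightarrow> real) \<Rightarrow> bool" where
  "IE ws i M \<longleftrightarrow> M 0 = real (Suc i) \<and> M 1 = real T \<and> M 2 = real (BD + Suc i) \<and> M 4 = 1 \<and> M 5 = - real (Suc i) \<and>
     (\<forall>i'. 1 \<le> i' \<and> i' \<le> i \<longrightarrow> M (- int i') = cand (bt T ws Gamma i')) \<and> (\<forall>a\<ge>6. M a = hD ws T a)"

lemma phaseE: assumes cr: "cregs M" and hp: "\<forall>a\<ge>0. M a = hD ws T a"
  shows "wp prog 183 M (10 + (T * 10 + 5)) (\<lambda>pc M'. pc = 196 \<and> (\<forall>t\<in>{1..T}. M' (- int t) = cand (bt T ws Gamma t)))"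
proof -
  have r7: "M (-7) = 1" "M (-1) = real T" "M (-15) = real BD" using cr unfolding cregs_def by auto
  note S0 = seg_out0[where M=M, OF r7(1)]
  have W0: "wp prog 183 M 10 (\<lambda>pc M'. pc = 188 \<and> IE ws 0 M')"
  proof (rule wp_mono[OF wpS_sound[OF S0]], simp, goal_cases)
    case (1 pc M')
    have pc: "pc = 188" and r: "M' 0 = 1" "M' 1 = M (-1)" "M' 2 = M (-15) + 1" "M' 4 = 1" "M' 5 = -1"
      and fr: "\<forall>a. a \<noteq> 0 \<and> a \<noteq> 1 \<and> a \<noteq> 2 \<and> a \<noteq> 4 \<and> a \<noteq> 5 \<longrightarrow> M' a = M a" using 1 by auto
    have h6: "\<forall>a\<ge>6. M' a = hD ws T a" using fr hp by auto
    show ?case unfolding IE_def using pc r r7 h6 by simp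
  qed
  have body: "wp prog 188 M 10 (\<lambda>pc M'. pc = 188 \<and> IE ws (Suc i) M')" if i: "i < T" and I: "IE ws i M" for i M
  proof -
    have r: "M 0 = real (Suc i)" "M 1 = real T" "M 2 = real (BD + Suc i)" "M 4 = 1" "M 5 = - real (Suc i)"
      and old: "\<forall>i'. 1 \<le> i' \<and> i' \<le> i \<longrightarrow> M (- int i') = cand (bt T ws Gamma i')"
      and h6: "\<forall>a\<ge>6. M a = hD ws T a" using I unfolding IE_def by auto
    have rd: "M (int (BD + Suc i)) = cand (bt T ws Gamma (Suc i))"
    proof -
      have "6 \<le> int (BD + Suc i)" by (simp add: BD_def BC_def)
      then have "M (int (BD + Suc i)) = hD ws T (int (BD + Suc i))" using h6 by blast
      also have "\<dots> = cand (bt T ws Gamma (Suc i))"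
      proof -
        have nn: "nat (int (BD + Suc i) - int BD) = Suc i" by simp
        have c: "int BD + int (T - T) < int (BD + Suc i) \<and> int (BD + Suc i) \<le> int BD + int T" using i by simp
        show ?thesis unfolding hD_def using c by (simp only: if_True nn simp_thms)
      qed
      finally show ?thesis .
    qed
    have si: "Suc i \<le> T" "1 \<le> Suc i" using i by auto
    note S = seg_outbody[where M=M and t="Suc i" and T=T and dd="BD + Suc i" and vv="cand (bt T ws Gamma (Suc i))",
      OF r(1) r(2) si(1) si(2) r(3) r(4) r(5) rd]
    show ?thesis
    proof (rule wp_mono[OF wpS_sound[OF S]], simp, goal_cases)
      case (1 pc M')
      have pc: "pc = 188" and r': "M' 0 = real (Suc (Suc i))" "M' 2 = real (Suc (BD + Suc i))" "M' 5 = - real (Suc (Suc i))"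
        "M' 1 = M 1" "M' 4 = M 4" "M' (- int (Suc i)) = cand (bt T ws Gamma (Suc i))"
        and fr: "\<forall>a. a \<noteq> 0 \<and> a \<noteq> 2 \<and> a \<noteq> 3 \<and> a \<noteq> 5 \<and> a \<noteq> - int (Suc i) \<longrightarrow> M' a = M a"
        using 1 by auto
      have o2: "\<forall>i'. 1 \<le> i' \<and> i' \<le> Suc i \<longrightarrow> M' (- int i') = cand (bt T ws Gamma i')"
      proof (intro allI impI)
        fix i' assume h: "1 \<le> i' \<and> i' \<le> Suc i"
        show "M' (- int i') = cand (bt T ws Gamma i')"
        proof (cases "i' = Suc i")
          case True then show ?thesis using r' by simp
        next
          case False
          then have "M' (- int i') = M (- int i')" using fr h by auto
          then show ?thesis using old h False by auto
        qed
      qed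
      have h6': "\<forall>a\<ge>6. M' a = hD ws T a" using fr h6 by auto
      show ?case unfolding IE_def using pc r' r o2 h6' by simp
    qed
  qed
  have ex: "wp prog 188 M 5 (\<lambda>pc M'. pc = 196 \<and> (\<forall>t\<in>{1..T}. M' (- int t) = cand (bt T ws Gamma t)))"
    if I: "IE ws T M" for M
  proof -
    have a: "M 0 = real (Suc T)" "M 1 = real T" "M 4 = 1" using I unfolding IE_def by auto
    note S2 = seg_outexit[where M=M and t="Suc T" and T=T, OF a(1) a(2) _ a(3)]
    show ?thesis by (rule wp_mono[OF wpS_sound[OF S2]]) (use I in \<open>auto simp: IE_def\<close>)
  qed
  have L: "wp prog 188 M' (T * 10 + 5) (\<lambda>pc M'. pc = 196 \<and> (\<forall>t\<in>{1..T}. M' (- int t) = cand (bt T ws Gamma t)))"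
    if "IE ws 0 M'" for M'
    using wp_loop[where I="IE ws" and n=T, OF body ex] that by simp
  show ?thesis using wp_bind[OF W0] L by blast
qed

definition Btot :: nat where
  "Btot = (2 + (30 + (T * 20 + 5))) + ((30 + (nB * (N * 20 + 111) + 5)) + ((20 + (N * 20 + 1 + 5)) +
     ((10 + (T * 40 + 5)) + (10 + (T * 10 + 5)))))"

lemma wp_all: "wp prog 0 M0 Btot (\<lambda>pc M'. pc = 196 \<and> (\<exists>ws. fin_ok ws \<and> (\<forall>t\<in>{1..T}. M' (- int t) = cand (bt T ws Gamma t))))"
  unfolding Btot_def
proof (rule wp_bind[OF phaseA], goal_cases)
  case (1 pc1 M1)
  then have pc1: "pc1 = 39" and I1: "IA T M1" by auto
  show ?case unfolding pc1
  proof (rule wp_bind[OF phaseB[OF I1]], goal_cases)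
    case (1 pc2 M2)
    then have pc2: "pc2 = 141" and I2: "IBj nE M2" by (auto simp: nE_def)
    show ?case unfolding pc2
    proof (rule wp_bind[OF phaseC[OF I2]], goal_cases)
      case (1 pc3 M3)
      then have pc3: "pc3 = 151" and cr: "cregs M3" and hp: "\<forall>a\<ge>0. M3 a = hB nE a" and ex: "\<exists>ws. fin_ok ws \<and> M3 (-42) = real ws"
        by auto
      obtain ws where ws: "fin_ok ws" "M3 (-42) = real ws" using ex by blast
      show ?case unfolding pc3
      proof (rule wp_bind[OF phaseD[OF ws(1) cr hp ws(2)]], goal_cases)
        case (1 pc4 M4)
        then have pc4: "pc4 = 183" and cr4: "cregs M4" and hp4: "\<forall>a\<ge>0. M4 a = hD ws T a" by auto
        show ?case unfolding pc4
          by (rule wp_mono[OF phaseE[OF cr4 hp4]]) (use ws in auto)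
      qed
    qed
  qed
qed

lemma main: "\<exists>n M. run prog (Running 0 M0) n = Halted M \<and> n \<le> Btot + 1 \<and>
   output_scenario M \<in> UU \<and> (\<forall>D\<in>UU. obj D \<le> obj (output_scenario M))"
proof -
  obtain n pc M where r: "run prog (Running 0 M0) n = Running pc M" "n \<le> Btot" and pc: "pc = 196"
    and ex: "\<exists>ws. fin_ok ws \<and> (\<forall>t\<in>{1..T}. M (- int t) = cand (bt T ws Gamma t))"
    using wp_all unfolding wp_def by blast
  obtain ws where ws: "fin_ok ws" "\<forall>t\<in>{1..T}. M (- int t) = cand (bt T ws Gamma t)" using ex by blast
  have h1: "run prog (Running 196 M) (Suc 0) = Halted M" by (simp add: run_Suc run_0 prog_len prog_at)
  have "run prog (Running 0 M0) (n + Suc 0) = run prog (run prog (Running 0 M0) n) (Suc 0)" by (rule run_add)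
  then have h: "run prog (Running 0 M0) (n + 1) = Halted M" using r(1) pc h1 by simp
  have o: "\<forall>t\<in>{1..T}. output_scenario M t = cand (bt T ws Gamma t)" using ws(2) by (simp add: output_scenario_def)
  have "output_scenario M \<in> UU \<and> (\<forall>D\<in>UU. obj D \<le> obj (output_scenario M))"
    using ws(1) o unfolding fin_ok_def by blast
  then show ?thesis using h r(2) by (intro exI[of _ "n + 1"] exI[of _ M]) auto
qed

lemma Btot_bound: "real (Btot + 1) \<le> 2000 * real T ^ 4"
proof -
  have e: "Btot + 1 = 180 * (T*T*T*T) + 513 * (T*T*T) + 333 * (T*T) + 130 * T + 129"
    unfolding Btot_def nB_def N_def TT1_def by (simp add: algebra_simps)
  have T1': "1 \<le> T" using T1 .
  have a: "T \<le> T*T*T*T" "T*T \<le> T*T*T*T" "T*T*T \<le> T*T*T*T" "1 \<le> T*T*T*T"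
  proof -
    have "1 \<le> T*T" using T1' by (simp add: Suc_le_eq)
    then have "1 \<le> T*T*T" using T1' by (metis mult_le_mono nat_mult_1)
    then have q: "1 \<le> T*T*T*T" using T1' by (metis mult_le_mono nat_mult_1)
    show "1 \<le> T*T*T*T" by (rule q)
    show "T \<le> T*T*T*T" using \<open>1 \<le> T*T*T\<close> by (metis mult_le_mono nat_mult_1 le_refl mult.commute mult.assoc)
    show "T*T \<le> T*T*T*T" using \<open>1 \<le> T*T\<close> by (metis mult_le_mono nat_mult_1 le_refl mult.assoc)
    show "T*T*T \<le> T*T*T*T" using T1' by (metis mult_le_mono nat_mult_1 le_refl)
  qed
  have "Btot + 1 \<le> 2000 * (T*T*T*T)" unfolding e using a by linarith
  then have "real (Btot + 1) \<le> real (2000 * (T*T*T*T))" by (rule of_nat_mono)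
  also have "\<dots> = 2000 * real T ^ 4" by (simp add: power4_eq_xxxx)
  finally show ?thesis .
qed

end

lemma top_main:
  fixes T :: nat and cP cI cB bP :: real and Gamma :: nat and x Dhat Delta :: "nat \<Rightarrow> real"
  assumes h: "T \<ge> 1 \<and> Gamma \<le> T \<and>
     (\<forall>t\<in>{1..T}. 0 \<le> x t) \<and>
     (\<forall>t\<in>{1..T}. 0 \<le> Dhat t) \<and>
     (\<forall>t\<in>{1..<T}. Dhat t \<le> Dhat (Suc t)) \<and>
     (\<forall>t\<in>{1..T}. 0 \<le> Delta t \<and> Delta t \<le> Dhat t)"
  shows "\<exists>n M. run prog (Running 0 (input_mem T cP cI cB bP Gamma x Dhat Delta)) n = Halted M \<and>
            real n \<le> 2000 * real T ^ 4 \<and>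
            output_scenario M \<in> Ud T Dhat Delta Gamma \<and>
            (\<forall>D\<in>Ud T Dhat Delta Gamma.
               adv_obj T cP cI cB bP x D \<le> adv_obj T cP cI cB bP x (output_scenario M))"
proof -
  interpret I: inst T cP cI cB bP Gamma x Dhat Delta
    by unfold_locales (use h in auto)
  obtain n M where m: "run prog (Running 0 I.M0) n = Halted M" "n \<le> I.Btot + 1"
    "output_scenario M \<in> Ud T Dhat Delta Gamma"
    "\<forall>D\<in>Ud T Dhat Delta Gamma. adv_obj T cP cI cB bP x D \<le> adv_obj T cP cI cB bP x (output_scenario M)"
    using I.main by blast
  have "real n \<le> real (I.Btot + 1)" using m(2) by simp
  also have "\<dots> \<le> 2000 * real T ^ 4" by (rule I.Btot_bound)
  finally have b: "real n \<le> 2000 * real T ^ 4" .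
  show ?thesis using m b unfolding I.M0_def by blast
qed

theorem theorem3:
  "\<exists>(P::prog) (c::real). \<forall>(T::nat) cP cI cB bP (Gamma::nat) x Dhat Delta.
     T \<ge> 1 \<and> Gamma \<le> T \<and>
     (\<forall>t\<in>{1..T}. 0 \<le> x t) \<and>
     (\<forall>t\<in>{1..T}. 0 \<le> Dhat t) \<and>
     (\<forall>t\<in>{1..<T}. Dhat t \<le> Dhat (Suc t)) \<and>
     (\<forall>t\<in>{1..T}. 0 \<le> Delta t \<and> Delta t \<le> Dhat t)
     \<longrightarrow>
     (\<exists>n M. run P (Running 0 (input_mem T cP cI cB bP Gamma x Dhat Delta)) n = Halted M \<and>
            real n \<le> c * real T ^ 4 \<and>
            output_scenario M \<in> Ud T Dhat Delta Gamma \<and>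
            (\<forall>D\<in>Ud T Dhat Delta Gamma.
               adv_obj T cP cI cB bP x D \<le> adv_obj T cP cI cB bP x (output_scenario M)))"
  apply (rule exI[of _ prog], rule exI[of _ 2000])
  using top_main by blast

end
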